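(* Let $\mathbb{K}\in\{\mathbb{R},\mathbb{C}\}$ and let $\Gamma_1,\Gamma_2\subset\mathsf{GL}_d(\mathbb{K})$ be semigroups in ping-pong position relative to open sets $U_1,U_2\subset\mathbb{P}(\mathbb{K}^d)$, $V_1,V_2\subset\mathsf{Gr}_{d-1}(\mathbb{K}^d)$. Let $\varepsilon>0$ be such that $\mathrm{dist}(\overline{U_i},\overline{V_j}):=\inf\{\mathrm{dist}(x,\mathbb{P}(W)):x\in\overline{U_i},W\in\overline{V_j}\}\ge\varepsilon$ for $\{i,j\}=\{1,2\}$, and let $0<\theta<\varepsilon^2$ and $x_i\in U_i$, $y_i\in V_i$ be such that $B_\theta(x_i)\subset U_i$ and $B_\theta(y_i)\subset V_i$ for $i=1,2$. Let $\Delta=\langle\Gamma_1,\Gamma_2\rangle$, $M=\max\{\frac{16}{\varepsilon\theta},\frac{8\sqrt{d-1}}{\varepsilon^2}\}$, and $F=\{h\in\Delta:\frac{\sigma_1}{\sigma_2}(h)<M\}$. Let $g\in\Delta\smallsetminus F$ be written as a reduced word $g=g_1\cdots g_n$, $n\ge1$, with $g_k\in(\Gamma_1\cup\Gamma_2)\smallsetminus\{I_d\}$. Then: (i) if $i(g_1)\in\{1,2\}$ is the unique index with $g_1\in\Gamma_{i(g_1)}$, then $d_{\mathbb{P}}(\Xi_1(g),U_{i(g_1)})\le\frac{\varepsilon}{8}$; (ii) if $i(g_n)\in\{1,2\}$ is the unique index with $g_n\in\Gamma_{i(g_n)}$, then $d_{\mathsf{Gr}}(\Xi_{d-1}(g^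{-1}),V_{i(g_n)})\le\frac{\varepsilon}{8}$.
   Context: $\mathbb{P}(\mathbb{K}^d)$ carries the metric $d_{\mathbb{P}}([u],[v])=\sqrt{1-\frac{|\langle u,v\rangle|^2}{\|u\|^2\|v\|^2}}$ (standard Hermitian inner product); $B_r(\cdot)$ are open balls; $\mathrm{dist}(X,Y)$ is the minimal $d_{\mathbb{P}}$-distance between subsets of $\mathbb{P}(\mathbb{K}^d)$; $\mathsf{Gr}_{d-1}(\mathbb{K}^d)$ carries the metric $d_{\mathsf{Gr}}(u^\perp,v^\perp)=d_{\mathbb{P}}([u],[v])$; distance from a point to a set is the infimum. For $g$ with singular values $\sigma_1(g)\ge\dots\ge\sigma_d(g)$ and Cartan decomposition $g=k_g\mathrm{diag}(\sigma_1(g),\dots,\sigma_d(g))k_g'$, if $\sigma_k(g)>\sigma_{k+1}(g)$ then $\Xi_k(g):=k_g\langle e_1,\dots,e_k\rangle$ (independent of choices). A point $[v]$ and hyperplane $W$ are transverse if $v\notin W$. Ping-pong position: whenever $\{i,j\}=\{1,2\}$, $\overline{U_i}$ and $\overline{V_j}$ are transverse, and for all $\gamma\in\Gamma_i\smallsetminus\{I_d\}$, $\gamma\overline{U_j}\subset U_i$ and $\gamma^{-1}\overline{V_j}\subset V_i$. A reduced word is a product of elements of $(\Gamma_1\cup\Gamma_2)\smallsetminus\{I_d\}$ with no two consecutive factors in the same $\Gamma_k$. *)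

theory Defs
  imports Complex_Main "Jordan_Normal_Form.Matrix"
begin

text \<open>The field K is represented as a subset of the complex numbers: either the reals or all of C.
  Vectors of K^d are complex vectors of dimension d with entries in K, matrices likewise.\<close>

definition Kfield :: "complex set \<Rightarrow> bool" where
  "Kfield K \<longleftrightarrow> K = \<real> \<or> K = UNIV"

definition Kvec :: "complex set \<Rightarrow> nat \<Rightarrow> complex vec \<Rightarrow> bool" where
  "Kvec K d v \<longleftrightarrow> v \<in> carrier_vec d \<and> (\<forall>i<d. v $ i \<in> K)"

definition Kmat :: "complex set \<Rightarrow> nat \<Rightarrow> complex mat \<Rightarrow> bool" where
  "Kmat K d g \<longleftrightarrow> g \<in> carrier_mat d d \<and> (\<forall>i<d. \<forall>j<d. g $$ (i,j) \<in> K)"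

definition GLK :: "complex set \<Rightarrow> nat \<Rightarrow> complex mat set" where
  "GLK K d = {g. Kmat K d g \<and> invertible_mat g}"

definition minv :: "nat \<Rightarrow> complex mat \<Rightarrow> complex mat" where
  "minv d g = (SOME h. h \<in> carrier_mat d d \<and> g * h = 1\<^sub>m d \<and> h * g = 1\<^sub>m d)"

definition cadj :: "complex mat \<Rightarrow> complex mat" where
  "cadj A = Matrix.mat (dim_col A) (dim_row A) (\<lambda>(i,j). cnj (A $$ (j,i)))"

definition unitaryK :: "complex set \<Rightarrow> nat \<Rightarrow> complex mat \<Rightarrow> bool" where
  "unitaryK K d k \<longleftrightarrow> Kmat K d k \<and> k * cadj k = 1\<^sub>m d \<and> cadj k * k = 1\<^sub>m d"

text \<open>Cartan decomposition g = k diag(sigma_1,...,sigma_d) k' (indices shifted to 0..d-1)\<close>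
definition cartan :: "complex set \<Rightarrow> nat \<Rightarrow> complex mat \<Rightarrow> complex mat \<Rightarrow> (nat \<Rightarrow> real) \<Rightarrow> complex mat \<Rightarrow> bool" where
  "cartan K d g k \<sigma> k' \<longleftrightarrow> unitaryK K d k \<and> unitaryK K d k' \<and>
     (\<forall>i<d. 0 \<le> \<sigma> i) \<and> (\<forall>i j. i \<le> j \<longrightarrow> j < d \<longrightarrow> \<sigma> j \<le> \<sigma> i) \<and>
     g = k * mat_diag d (\<lambda>i. complex_of_real (\<sigma> i)) * k'"

text \<open>singular values: sv K d g i = sigma_(i+1)(g)\<close>
definition sv :: "complex set \<Rightarrow> nat \<Rightarrow> complex mat \<Rightarrow> nat \<Rightarrow> real" where
  "sv K d g = (SOME \<sigma>. \<exists>k k'. cartan K d g k \<sigma> k')"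

definition hinner :: "complex vec \<Rightarrow> complex vec \<Rightarrow> complex" where
  "hinner u v = u \<bullet>c v"

definition nrm2 :: "complex vec \<Rightarrow> real" where
  "nrm2 u = Re (hinner u u)"

text \<open>Points of P(K^d) are represented by nonzero vectors of K^d; subsets of P(K^d) by
  sets of nonzero vectors saturated under K^* scaling.\<close>
definition PK :: "complex set \<Rightarrow> nat \<Rightarrow> complex vec set" where
  "PK K d = {v. Kvec K d v \<and> v \<noteq> 0\<^sub>v d}"

definition dP :: "complex vec \<Rightarrow> complex vec \<Rightarrow> real" where
  "dP u v = sqrt (1 - (cmod (hinner u v))\<^sup>2 / (nrm2 u * nrm2 v))"

definition projset :: "complex set \<Rightarrow> nat \<Rightarrow> complex vec set \<Rightarrow> bool" where
  "projset K d U \<longleftrightarrow> U \<subseteq> PK K d \<and> (\<forall>v\<in>U. \<forall>c\<in>K. c \<noteq> 0 \<longrightarrow> c \<cdot>\<^sub>v v \<in> U)"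

definition openP :: "complex set \<Rightarrow> nat \<Rightarrow> complex vec set \<Rightarrow> bool" where
  "openP K d U \<longleftrightarrow> projset K d U \<and> (\<forall>x\<in>U. \<exists>r>0. \<forall>y\<in>PK K d. dP x y < r \<longrightarrow> y \<in> U)"

definition closP :: "complex set \<Rightarrow> nat \<Rightarrow> complex vec set \<Rightarrow> complex vec set" where
  "closP K d U = {x \<in> PK K d. \<forall>r>0. \<exists>y\<in>U. dP x y < r}"

definition ballP :: "complex set \<Rightarrow> nat \<Rightarrow> complex vec \<Rightarrow> real \<Rightarrow> complex vec set" where
  "ballP K d x r = {y \<in> PK K d. dP x y < r}"

definition distP :: "complex vec \<Rightarrow> complex vec set \<Rightarrow> real" where
  "distP x U = Inf (dP x ` U)"

text \<open>Subsets of Gr_(d-1)(K^d)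
  are represented by saturated sets N of normal vectors, standing for {u^perp | u in N};
  the metric is d_Gr(u^perp, v^perp) = dP u v, so open sets, balls, closures and distances
  in Gr_(d-1) are openP, ballP, closP, distP applied to normal vectors.\<close>
definition hyp :: "complex set \<Rightarrow> nat \<Rightarrow> complex vec \<Rightarrow> complex vec set" where
  "hyp K d u = {x. Kvec K d x \<and> hinner x u = 0}"

definition actP :: "complex mat \<Rightarrow> complex vec set \<Rightarrow> complex vec set" where
  "actP g U = (\<lambda>v. g *\<^sub>v v) ` U"

definition actH :: "complex set \<Rightarrow> nat \<Rightarrow> complex mat \<Rightarrow> complex vec set \<Rightarrow> complex vec set" where
  "actH K d g N = {w \<in> PK K d. \<exists>u\<in>N. (\<lambda>x. g *\<^sub>v x) ` hyp K d u = hyp K d w}"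

definition pingpong :: "complex set \<Rightarrow> nat \<Rightarrow> (nat \<Rightarrow> complex mat set) \<Rightarrow>
    (nat \<Rightarrow> complex vec set) \<Rightarrow> (nat \<Rightarrow> complex vec set) \<Rightarrow> bool" where
  "pingpong K d \<Gamma> U V \<longleftrightarrow>
    (\<forall>i\<in>{1,2}. \<forall>j\<in>{1,2}. i \<noteq> j \<longrightarrow>
       (\<forall>x\<in>closP K d (U i). \<forall>u\<in>closP K d (V j). hinner x u \<noteq> 0) \<and>
       (\<forall>\<gamma>\<in>\<Gamma> i - {1\<^sub>m d}. actP \<gamma> (closP K d (U j)) \<subseteq> U i \<and>
                            actH K d (minv d \<gamma>) (closP K d (V j)) \<subseteq> V i))"

definition semigroupK :: "complex set \<Rightarrow> nat \<Rightarrow> complex mat set \<Rightarrow> bool" where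
  "semigroupK K d G \<longleftrightarrow> G \<subseteq> GLK K d \<and> (\<forall>a\<in>G. \<forall>b\<in>G. a * b \<in> G)"

definition gen2 :: "nat \<Rightarrow> complex mat set \<Rightarrow> complex mat set \<Rightarrow> complex mat set" where
  "gen2 d A B = {foldr (*) ws (1\<^sub>m d) | ws. ws \<noteq> [] \<and> set ws \<subseteq> A \<union> B}"

definition reduced :: "nat \<Rightarrow> (nat \<Rightarrow> complex mat set) \<Rightarrow> complex mat list \<Rightarrow> bool" where
  "reduced d \<Gamma> gs \<longleftrightarrow> gs \<noteq> [] \<and> (\<forall>k<length gs. gs ! k \<in> (\<Gamma> 1 \<union> \<Gamma> 2) - {1\<^sub>m d}) \<and>
     (\<forall>k. k + 1 < length gs \<longrightarrow> (\<forall>j\<in>{1,2}. \<not> (gs ! k \<in> \<Gamma> j \<and> gs ! (k+1) \<in> \<Gamma> j)))"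

definition spanFirst :: "complex set \<Rightarrow> nat \<Rightarrow> complex mat \<Rightarrow> complex vec set" where
  "spanFirst K d k = {vec d (\<lambda>r. \<Sum>j<d-1. c j * k $$ (r,j)) | c. \<forall>j<d-1. c j \<in> K}"

end

theory Submission
  imports Defs "HOL-Analysis.L2_Norm"
begin


lemma hinner_sum: "v \<in> carrier_vec d \<Longrightarrow> hinner u v = (\<Sum>i<d. u $ i * cnj (v $ i))"
  unfolding hinner_def scalar_prod_def by (auto intro!: sum.cong)

lemma nrm2_sum: "v \<in> carrier_vec d \<Longrightarrow> nrm2 v = (\<Sum>i<d. (cmod (v $ i))\<^sup>2)"
proof -
  assume v: "v \<in> carrier_vec d"
  have "nrm2 v = Re (\<Sum>i<d. v $ i * cnj (v $ i))" unfolding nrm2_def hinner_sum[OF v] ..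
  also have "\<dots> = (\<Sum>i<d. Re (v $ i * cnj (v $ i)))" by simp
  also have "\<dots> = (\<Sum>i<d. (cmod (v $ i))\<^sup>2)"
    by (intro sum.cong refl) (simp add: complex_mult_cnj cmod_def power2_eq_square)
  finally show ?thesis .
qed

lemma hinner_self: "v \<in> carrier_vec d \<Longrightarrow> hinner v v = of_real (nrm2 v)"
proof -
  assume v: "v \<in> carrier_vec d"
  have "hinner v v = (\<Sum>i<d. of_real ((cmod (v $ i))\<^sup>2))"
    unfolding hinner_sum[OF v] by (intro sum.cong refl) (simp add: complex_mult_cnj cmod_def)
  thus ?thesis unfolding nrm2_sum[OF v] by simp
qed

lemma nrm2_nonneg: "v \<in> carrier_vec d \<Longrightarrow> 0 \<le> nrm2 v"
  by (simp add: nrm2_sum sum_nonneg)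

lemma nrm2_pos: assumes "v \<in> carrier_vec d" "v \<noteq> 0\<^sub>v d" shows "0 < nrm2 v"
proof -
  obtain i where i: "i < d" "v $ i \<noteq> 0" using assms by (metis carrier_vecD eq_vecI index_zero_vec)
  have "(cmod (v $ i))\<^sup>2 \<le> (\<Sum>j<d. (cmod (v $ j))\<^sup>2)"
    by (rule member_le_sum) (use i in auto)
  moreover have "0 < (cmod (v $ i))\<^sup>2" using i by simp
  ultimately show ?thesis using nrm2_sum[OF assms(1)] by linarith
qed

lemma hinner_cnj: "u \<in> carrier_vec d \<Longrightarrow> v \<in> carrier_vec d \<Longrightarrow> hinner v u = cnj (hinner u v)"
  by (simp add: hinner_sum mult.commute)

lemma hinner_add_left: "u \<in> carrier_vec d \<Longrightarrow> v \<in> carrier_vec d \<Longrightarrow> w \<in> carrier_vec d \<Longrightarrow>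
   hinner (u + v) w = hinner u w + hinner v w"
  by (simp add: hinner_sum sum.distrib algebra_simps)

lemma hinner_smult_left: "u \<in> carrier_vec d \<Longrightarrow> w \<in> carrier_vec d \<Longrightarrow>
   hinner (c \<cdot>\<^sub>v u) w = c * hinner u w"
  by (simp add: hinner_sum sum_distrib_left algebra_simps)

lemma hinner_smult_right: "u \<in> carrier_vec d \<Longrightarrow> w \<in> carrier_vec d \<Longrightarrow>
   hinner u (c \<cdot>\<^sub>v w) = cnj c * hinner u w"
  by (simp add: hinner_sum sum_distrib_left algebra_simps)

lemma hinner_minus_left: "u \<in> carrier_vec d \<Longrightarrow> v \<in> carrier_vec d \<Longrightarrow> w \<in> carrier_vec d \<Longrightarrow>
   hinner (u - v) w = hinner u w - hinner v w"
  by (simp add: hinner_sum sum_subtractf algebra_simps)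

lemma CS: assumes u: "u \<in> carrier_vec d" and v: "v \<in> carrier_vec d"
  shows "(cmod (hinner u v))\<^sup>2 \<le> nrm2 u * nrm2 v"
proof -
  have "cmod (hinner u v) \<le> (\<Sum>i<d. cmod (u $ i * cnj (v $ i)))"
    unfolding hinner_sum[OF v] by (rule norm_sum)
  also have "\<dots> = (\<Sum>i<d. \<bar>cmod (u $ i)\<bar> * \<bar>cmod (v $ i)\<bar>)" by (simp add: norm_mult)
  also have "\<dots> \<le> L2_set (\<lambda>i. cmod (u $ i)) {..<d} * L2_set (\<lambda>i. cmod (v $ i)) {..<d}"
    by (rule L2_set_mult_ineq)
  finally have 1: "cmod (hinner u v) \<le> L2_set (\<lambda>i. cmod (u $ i)) {..<d} * L2_set (\<lambda>i. cmod (v $ i)) {..<d}" .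
  have "(cmod (hinner u v))\<^sup>2 \<le> (L2_set (\<lambda>i. cmod (u $ i)) {..<d} * L2_set (\<lambda>i. cmod (v $ i)) {..<d})\<^sup>2"
    using 1 by (intro power_mono) auto
  also have "\<dots> = nrm2 u * nrm2 v"
    unfolding power_mult_distrib L2_set_def nrm2_sum[OF u] nrm2_sum[OF v]
    by (simp add: sum_nonneg)
  finally show ?thesis .
qed

lemma dP_nonneg: assumes u: "u \<in> carrier_vec d" and v: "v \<in> carrier_vec d" shows "0 \<le> dP u v"
proof -
  have "(cmod (hinner u v))\<^sup>2 / (nrm2 u * nrm2 v) \<le> 1"
    using CS[OF u v] nrm2_nonneg[OF u] nrm2_nonneg[OF v]
    by (cases "nrm2 u * nrm2 v = 0") (auto simp: divide_le_eq_1)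
  thus ?thesis unfolding dP_def by simp
qed

lemma dP_le1: assumes u: "u \<in> carrier_vec d" and v: "v \<in> carrier_vec d" shows "dP u v \<le> 1"
proof -
  have "0 \<le> (cmod (hinner u v))\<^sup>2 / (nrm2 u * nrm2 v)"
    using nrm2_nonneg[OF u] nrm2_nonneg[OF v] by simp
  thus ?thesis unfolding dP_def by simp
qed

lemma dP_self: assumes u: "u \<in> carrier_vec d" "u \<noteq> 0\<^sub>v d" shows "dP u u = 0"
proof -
  have "cmod (hinner u u) = nrm2 u" using hinner_self[OF u(1)] nrm2_nonneg[OF u(1)] by simp
  thus ?thesis using nrm2_pos[OF u] unfolding dP_def by (simp add: power2_eq_square)
qed

lemma dP_smult_left: assumes u: "u \<in> carrier_vec d" and v: "v \<in> carrier_vec d" and c: "c \<noteq> 0"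
  shows "dP (c \<cdot>\<^sub>v u) v = dP u v"
proof -
  have n: "nrm2 (c \<cdot>\<^sub>v u) = (cmod c)\<^sup>2 * nrm2 u"
    using u by (simp add: nrm2_sum sum_distrib_left norm_mult power_mult_distrib)
  show ?thesis unfolding dP_def n hinner_smult_left[OF u v]
    using c by (simp add: norm_mult power_mult_distrib)
qed

lemma dP_smult_right: assumes u: "u \<in> carrier_vec d" and v: "v \<in> carrier_vec d" and c: "c \<noteq> 0"
  shows "dP u (c \<cdot>\<^sub>v v) = dP u v"
proof -
  have n: "nrm2 (c \<cdot>\<^sub>v v) = (cmod c)\<^sup>2 * nrm2 v"
    using v by (simp add: nrm2_sum sum_distrib_left norm_mult power_mult_distrib)
  show ?thesis unfolding dP_def n hinner_smult_right[OF u v]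
    using c by (simp add: norm_mult power_mult_distrib)
qed



lemma mvsum: "A \<in> carrier_mat n d \<Longrightarrow> v \<in> carrier_vec d \<Longrightarrow> i < n \<Longrightarrow>
  (A *\<^sub>v v) $ i = (\<Sum>j<d. A $$ (i,j) * v $ j)"
  by (auto simp: scalar_prod_def intro!: sum.cong)

lemma mmsum: "A \<in> carrier_mat n m \<Longrightarrow> B \<in> carrier_mat m l \<Longrightarrow> i < n \<Longrightarrow> j < l \<Longrightarrow>
  (A * B) $$ (i,j) = (\<Sum>k<m. A $$ (i,k) * B $$ (k,j))"
  by (auto simp: scalar_prod_def intro!: sum.cong)

lemma cadj_carrier[simp]: "A \<in> carrier_mat n m \<Longrightarrow> cadj A \<in> carrier_mat m n"
  by (auto simp: cadj_def)

lemma cadj_index: "A \<in> carrier_mat n m \<Longrightarrow> i < m \<Longrightarrow> j < n \<Longrightarrow> cadj A $$ (i,j) = cnj (A $$ (j,i))"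
  by (auto simp: cadj_def)

lemma cadj_dims[simp]: "dim_row (cadj A) = dim_col A" "dim_col (cadj A) = dim_row A"
  by (auto simp: cadj_def)

lemma cadj_cadj: "A \<in> carrier_mat n m \<Longrightarrow> cadj (cadj A) = A"
  by (intro eq_matI) (auto simp: cadj_def)

lemma cadj_mult: assumes A: "A \<in> carrier_mat n m" and B: "B \<in> carrier_mat m l"
  shows "cadj (A * B) = cadj B * cadj A"
proof (rule eq_matI)
  fix i j assume i: "i < dim_row (cadj B * cadj A)" and j: "j < dim_col (cadj B * cadj A)"
  hence i': "i < l" and j': "j < n" using A B by auto
  have "cadj (A * B) $$ (i,j) = cnj ((A * B) $$ (j,i))"
    using A B i' j' by (intro cadj_index) auto
  also have "\<dots> = (\<Sum>k<m. cnj (A $$ (j,k)) * cnj (B $$ (k,i)))"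
    using A B i' j' by (subst mmsum[OF A B]) auto
  also have "\<dots> = (cadj B * cadj A) $$ (i,j)"
    using A B i' j' by (subst mmsum[of _ l m _ n]) (auto simp: cadj_index mult.commute intro!: sum.cong)
  finally show "cadj (A * B) $$ (i,j) = (cadj B * cadj A) $$ (i,j)" .
qed (use A B in auto)

lemma cadj_one[simp]: "cadj (1\<^sub>m n) = 1\<^sub>m n"
  by (intro eq_matI) (auto simp: cadj_def)

lemma cadj_diag_real: "cadj (mat_diag n (\<lambda>i. complex_of_real (f i))) = mat_diag n (\<lambda>i. complex_of_real (f i))"
  by (intro eq_matI) (auto simp: cadj_def mat_diag_def)

lemma hinner_adj: assumes A: "A \<in> carrier_mat n m" and a: "a \<in> carrier_vec m" and b: "b \<in> carrier_vec n"
  shows "hinner (A *\<^sub>v a) b = hinner a (cadj A *\<^sub>v b)"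
proof -
  have "hinner (A *\<^sub>v a) b = (\<Sum>i<n. (\<Sum>j<m. A $$ (i,j) * a $ j) * cnj (b $ i))"
    using A a b by (subst hinner_sum[OF b]) (auto simp: mvsum[OF A a] simp del: index_mult_mat_vec intro!: sum.cong)
  also have "\<dots> = (\<Sum>i<n. \<Sum>j<m. A $$ (i,j) * a $ j * cnj (b $ i))"
    by (simp add: sum_distrib_right)
  also have "\<dots> = (\<Sum>j<m. \<Sum>i<n. A $$ (i,j) * a $ j * cnj (b $ i))"
    by (rule sum.swap)
  also have "\<dots> = (\<Sum>j<m. a $ j * cnj (\<Sum>i<n. cnj (A $$ (i,j)) * b $ i))"
    by (simp add: sum_distrib_left algebra_simps)
  also have "\<dots> = hinner a (cadj A *\<^sub>v b)"
  proof -
    have cb: "cadj A *\<^sub>v b \<in> carrier_vec m" using cadj_carrier[OF A] b by (rule mult_mat_vec_carrier)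
    have "\<And>j. j < m \<Longrightarrow> (cadj A *\<^sub>v b) $ j = (\<Sum>i<n. cnj (A $$ (i,j)) * b $ i)"
      using A b by (subst mvsum[of _ m n]) (auto simp: cadj_index)
    thus ?thesis by (subst hinner_sum[OF cb]) auto
  qed
  finally show ?thesis .
qed

definition unit :: "nat \<Rightarrow> complex mat \<Rightarrow> bool" where
  "unit d k \<longleftrightarrow> k \<in> carrier_mat d d \<and> k * cadj k = 1\<^sub>m d \<and> cadj k * k = 1\<^sub>m d"

lemma unitaryK_unit: "unitaryK K d k \<Longrightarrow> unit d k"
  by (auto simp: unitaryK_def unit_def Kmat_def)

lemma unit_cadj: "unit d k \<Longrightarrow> unit d (cadj k)"
  by (auto simp: unit_def cadj_cadj)

lemma unit_mult: assumes ua: "unit d a" and ub: "unit d b" shows "unit d (a * b)"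
proof -
  have a: "a \<in> carrier_mat d d" and b: "b \<in> carrier_mat d d" using ua ub by (auto simp: unit_def)
  have ca: "cadj a \<in> carrier_mat d d" and cb: "cadj b \<in> carrier_mat d d" using a b by auto
  have "a * b * cadj (a * b) = a * b * (cadj b * cadj a)" using a b by (simp add: cadj_mult)
  also have "\<dots> = a * (b * (cadj b * cadj a))" using a b cb ca by (meson assoc_mult_mat mult_carrier_mat)
  also have "b * (cadj b * cadj a) = (b * cadj b) * cadj a" by (rule assoc_mult_mat[symmetric, OF b cb ca])
  also have "\<dots> = cadj a" using ub ca by (simp add: unit_def left_mult_one_mat)
  also have "a * cadj a = 1\<^sub>m d" using ua by (simp add: unit_def)
  finally have 1: "a * b * cadj (a * b) = 1\<^sub>m d" .
  have "cadj (a * b) * (a * b) = cadj b * cadj a * (a * b)" using a b by (simp add: cadj_mult)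
  also have "\<dots> = cadj b * (cadj a * (a * b))" using a b cb ca by (meson assoc_mult_mat mult_carrier_mat)
  also have "cadj a * (a * b) = (cadj a * a) * b" by (rule assoc_mult_mat[symmetric, OF ca a b])
  also have "\<dots> = b" using ua b by (simp add: unit_def left_mult_one_mat)
  also have "cadj b * b = 1\<^sub>m d" using ub by (simp add: unit_def)
  finally have 2: "cadj (a * b) * (a * b) = 1\<^sub>m d" .
  show ?thesis using 1 2 a b by (auto simp: unit_def)
qed

lemma unit_hinner: assumes k: "unit d k" and a: "a \<in> carrier_vec d" and b: "b \<in> carrier_vec d"
  shows "hinner (k *\<^sub>v a) (k *\<^sub>v b) = hinner a b"
proof -
  have c: "k \<in> carrier_mat d d" using k by (auto simp: unit_def)
  have "hinner (k *\<^sub>v a) (k *\<^sub>v b) = hinner a (cadj k *\<^sub>v (k *\<^sub>v b))"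
    using c a b by (intro hinner_adj) auto
  also have "cadj k *\<^sub>v (k *\<^sub>v b) = (cadj k * k) *\<^sub>v b" using c b by (simp add: assoc_mult_mat_vec[of _ d d _ d])
  also have "\<dots> = b" using k b by (simp add: unit_def)
  finally show ?thesis .
qed

lemma unit_nrm2: "unit d k \<Longrightarrow> a \<in> carrier_vec d \<Longrightarrow> nrm2 (k *\<^sub>v a) = nrm2 a"
  unfolding nrm2_def by (simp add: unit_hinner)

lemma unit_dP: "unit d k \<Longrightarrow> a \<in> carrier_vec d \<Longrightarrow> b \<in> carrier_vec d \<Longrightarrow> dP (k *\<^sub>v a) (k *\<^sub>v b) = dP a b"
  unfolding dP_def nrm2_def by (simp add: unit_hinner)

lemma unit_carrier: "unit d k \<Longrightarrow> k \<in> carrier_mat d d" by (simp add: unit_def)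

lemma unit_inv_left: assumes k: "unit d k" and b: "b \<in> carrier_vec d" shows "cadj k *\<^sub>v (k *\<^sub>v b) = b"
proof -
  have c: "k \<in> carrier_mat d d" using k by (simp add: unit_def)
  have "cadj k *\<^sub>v (k *\<^sub>v b) = (cadj k * k) *\<^sub>v b"
    by (rule assoc_mult_mat_vec[symmetric], use c b in auto)
  thus ?thesis using k b by (simp add: unit_def)
qed

lemma unit_inv_right: "unit d k \<Longrightarrow> b \<in> carrier_vec d \<Longrightarrow> k *\<^sub>v (cadj k *\<^sub>v b) = b"
  using unit_inv_left[OF unit_cadj] by (metis cadj_cadj unit_def)

lemma diag_mult_vec: assumes v: "v \<in> carrier_vec d" shows "mat_diag d e *\<^sub>v v = vec d (\<lambda>i. e i * v $ i)"
proof (rule eq_vecI)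
  fix i assume "i < dim_vec (vec d (\<lambda>i. e i * v $ i))"
  hence i: "i < d" by simp
  have "(mat_diag d e *\<^sub>v v) $ i = (\<Sum>j<d. (if i = j then e j else 0) * v $ j)"
    using v i by (subst mvsum[of _ d d]) (auto simp: mat_diag_def)
  also have "\<dots> = (\<Sum>j<d. (if j = i then e i * v $ i else 0))" by (rule sum.cong) auto
  finally show "(mat_diag d e *\<^sub>v v) $ i = vec d (\<lambda>i. e i * v $ i) $ i" using i by simp
qed (use v in \<open>auto simp: mat_diag_def\<close>)

lemma decomp_apply: assumes A: "A \<in> carrier_mat d d" and B: "B \<in> carrier_mat d d" and v: "v \<in> carrier_vec d"
  shows "(A * mat_diag d e * B) *\<^sub>v v = A *\<^sub>v vec d (\<lambda>i. e i * (B *\<^sub>v v) $ i)"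
proof -
  have "(A * mat_diag d e * B) *\<^sub>v v = A *\<^sub>v (mat_diag d e *\<^sub>v (B *\<^sub>v v))"
    using A B v by (simp add: assoc_mult_mat_vec[of _ d d _ d])
  thus ?thesis using B v by (simp add: diag_mult_vec)
qed

lemma norm_formula: assumes A: "unit d A" and B: "B \<in> carrier_mat d d" and v: "v \<in> carrier_vec d"
  shows "nrm2 ((A * mat_diag d e * B) *\<^sub>v v) = (\<Sum>i<d. (cmod (e i))\<^sup>2 * (cmod ((B *\<^sub>v v) $ i))\<^sup>2)"
  using A B v by (simp add: decomp_apply unit_carrier unit_nrm2 nrm2_sum norm_mult power_mult_distrib)



lemma Kc_add: "Kfield K \<Longrightarrow> a \<in> K \<Longrightarrow> b \<in> K \<Longrightarrow> a + b \<in> K" by (auto simp: Kfield_def)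
lemma Kc_diff: "Kfield K \<Longrightarrow> a \<in> K \<Longrightarrow> b \<in> K \<Longrightarrow> a - b \<in> K" by (auto simp: Kfield_def)
lemma Kc_mult: "Kfield K \<Longrightarrow> a \<in> K \<Longrightarrow> b \<in> K \<Longrightarrow> a * b \<in> K" by (auto simp: Kfield_def)
lemma Kc_divide: "Kfield K \<Longrightarrow> a \<in> K \<Longrightarrow> b \<in> K \<Longrightarrow> a / b \<in> K" by (auto simp: Kfield_def)
lemma Kc_uminus: "Kfield K \<Longrightarrow> a \<in> K \<Longrightarrow> - a \<in> K" by (auto simp: Kfield_def)
lemma Kc_cnj: "Kfield K \<Longrightarrow> a \<in> K \<Longrightarrow> cnj a \<in> K" by (auto simp: Kfield_def Reals_cnj_iff)
lemma Kc_real: "Kfield K \<Longrightarrow> complex_of_real r \<in> K" by (auto simp: Kfield_def)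
lemma Kc_0: "Kfield K \<Longrightarrow> 0 \<in> K" by (auto simp: Kfield_def)
lemma Kc_1: "Kfield K \<Longrightarrow> 1 \<in> K" by (auto simp: Kfield_def)
lemma Kc_sum: "Kfield K \<Longrightarrow> (\<And>i. i \<in> A \<Longrightarrow> f i \<in> K) \<Longrightarrow> sum f A \<in> K"
  by (auto simp: Kfield_def)

lemma Kmat_carrier: "Kmat K d g \<Longrightarrow> g \<in> carrier_mat d d" by (simp add: Kmat_def)
lemma Kvec_carrier: "Kvec K d g \<Longrightarrow> g \<in> carrier_vec d" by (simp add: Kvec_def)

lemma Kmat_mult: assumes K: "Kfield K" and a: "Kmat K d a" and b: "Kmat K d b" shows "Kmat K d (a * b)"
  unfolding Kmat_def
proof (intro conjI allI impI)
  show "a * b \<in> carrier_mat d d" using a b by (auto simp: Kmat_def)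
  fix i j assume i: "i < d" and j: "j < d"
  show "(a * b) $$ (i,j) \<in> K" using a b i j
    by (subst mmsum[of _ d d _ d]) (auto simp: Kmat_def intro!: Kc_sum[OF K] Kc_mult[OF K])
qed

lemma Kmat_mv: assumes K: "Kfield K" and a: "Kmat K d a" and v: "Kvec K d v" shows "Kvec K d (a *\<^sub>v v)"
  unfolding Kvec_def
proof (intro conjI allI impI)
  show "a *\<^sub>v v \<in> carrier_vec d" using a v by (auto simp: Kmat_def Kvec_def)
  fix i assume i: "i < d"
  show "(a *\<^sub>v v) $ i \<in> K" using a v i
    by (subst mvsum[of _ d d]) (auto simp: Kmat_def Kvec_def intro!: Kc_sum[OF K] Kc_mult[OF K])
qed

lemma Kmat_cadj: assumes K: "Kfield K" and a: "Kmat K d a" shows "Kmat K d (cadj a)"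
  using a by (auto simp: Kmat_def cadj_index intro!: Kc_cnj[OF K])

lemma Kmat_one: "Kfield K \<Longrightarrow> Kmat K d (1\<^sub>m d)"
  by (auto simp: Kmat_def Kc_0 Kc_1)

lemma minv_spec: assumes g: "g \<in> carrier_mat d d" and inv: "invertible_mat g"
  shows "minv d g \<in> carrier_mat d d \<and> g * minv d g = 1\<^sub>m d \<and> minv d g * g = 1\<^sub>m d"
proof -
  obtain B where B: "inverts_mat g B" "inverts_mat B g" using inv by (auto simp: invertible_mat_def)
  have 1: "g * B = 1\<^sub>m d" using B g by (auto simp: inverts_mat_def)
  have 2: "B * g = 1\<^sub>m (dim_row B)" using B by (auto simp: inverts_mat_def)
  have "dim_col B = d" using arg_cong[OF 1, of dim_col] by simp
  moreover have "dim_row B = d" using arg_cong[OF 2, of dim_col] g by simp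
  ultimately have Bc: "B \<in> carrier_mat d d" by auto
  have "\<exists>h. h \<in> carrier_mat d d \<and> g * h = 1\<^sub>m d \<and> h * g = 1\<^sub>m d"
    using Bc 1 2 by auto
  thus ?thesis unfolding minv_def by (rule someI_ex)
qed

lemma assoc4: fixes A B C D :: "complex mat"
  assumes "A \<in> carrier_mat d d" "B \<in> carrier_mat d d" "C \<in> carrier_mat d d" "D \<in> carrier_mat d d"
  shows "A * B * (C * D) = A * (B * C) * D"
proof -
  have "A * B * (C * D) = A * (B * (C * D))" using assms by (meson assoc_mult_mat mult_carrier_mat)
  also have "B * (C * D) = (B * C) * D" using assms by (metis assoc_mult_mat)
  also have "A * (B * C * D) = A * (B * C) * D" using assms by (metis assoc_mult_mat mult_carrier_mat)
  finally show ?thesis .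
qed

lemma inv_unique: fixes g h h' :: "complex mat" assumes g: "g \<in> carrier_mat d d" and h: "h \<in> carrier_mat d d" and h': "h' \<in> carrier_mat d d"
  and 1: "g * h = 1\<^sub>m d" and 2: "h' * g = 1\<^sub>m d" shows "h = h'"
proof -
  have "h' = h' * (g * h)" using 1 h' by (simp add: right_mult_one_mat)
  also have "\<dots> = (h' * g) * h" using g h h' by simp
  also have "\<dots> = h" using 2 h by simp
  finally show ?thesis by simp
qed

lemma Kmat_minv: assumes K: "Kfield K" and g: "Kmat K d g" and inv: "invertible_mat g"
  shows "Kmat K d (minv d g)"
proof -
  have gc: "g \<in> carrier_mat d d" using g by (simp add: Kmat_def)
  note sp = minv_spec[OF gc inv]
  define h where "h = minv d g"
  have hc: "h \<in> carrier_mat d d" using sp h_def by simp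
  show ?thesis
  proof (cases "K = UNIV")
    case True thus ?thesis using hc by (simp add: Kmat_def h_def[symmetric])
  next
    case False
    hence KR: "K = \<real>" using K by (simp add: Kfield_def)
    define hc' where "hc' = Matrix.mat d d (\<lambda>(i,j). cnj (h $$ (i,j)))"
    have hcc: "hc' \<in> carrier_mat d d" by (simp add: hc'_def)
    have "g * hc' = 1\<^sub>m d"
    proof (rule eq_matI)
      fix i j assume "i < dim_row (1\<^sub>m d :: complex mat)" "j < dim_col (1\<^sub>m d :: complex mat)"
      hence i: "i < d" and j: "j < d" by auto
      have gr: "\<And>k. k < d \<Longrightarrow> cnj (g $$ (i,k)) = g $$ (i,k)"
        using g i KR by (auto simp: Kmat_def Reals_cnj_iff)
      have "(g * hc') $$ (i,j) = (\<Sum>k<d. g $$ (i,k) * cnj (h $$ (k,j)))"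
        using gc hcc i j by (subst mmsum[OF gc hcc i j]) (auto simp: hc'_def)
      also have "\<dots> = cnj (\<Sum>k<d. g $$ (i,k) * h $$ (k,j))"
        using gr by (auto intro!: sum.cong)
      also have "(\<Sum>k<d. g $$ (i,k) * h $$ (k,j)) = (g * h) $$ (i,j)"
        using mmsum[OF gc hc i j] by simp
      also have "\<dots> = 1\<^sub>m d $$ (i,j)" using sp h_def by simp
      finally show "(g * hc') $$ (i,j) = 1\<^sub>m d $$ (i,j)" using i j by simp
    qed (use gc hcc in auto)
    hence "hc' = h" using inv_unique[OF gc hcc hc] sp h_def by simp
    hence "\<And>i j. i < d \<Longrightarrow> j < d \<Longrightarrow> cnj (h $$ (i,j)) = h $$ (i,j)"
      unfolding hc'_def by (metis case_prod_conv index_mat(1))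
    thus ?thesis using hc KR by (auto simp: Kmat_def h_def[symmetric] Reals_cnj_iff)
  qed
qed

lemma invertible_mult: fixes A B :: "complex mat" assumes A: "A \<in> carrier_mat d d" and B: "B \<in> carrier_mat d d"
  and iA: "invertible_mat A" and iB: "invertible_mat B" shows "invertible_mat (A * B)"
proof -
  note a = minv_spec[OF A iA] and b = minv_spec[OF B iB]
  define X where "X = minv d B * minv d A"
  have Xc: "X \<in> carrier_mat d d" using a b X_def by auto
  have "A * B * X = A * (B * minv d B) * minv d A"
    using A B a b X_def by (simp add: assoc4)
  also have "\<dots> = 1\<^sub>m d" using a b A by (simp add: right_mult_one_mat)
  finally have 1: "A * B * X = 1\<^sub>m d" .
  have "X * (A * B) = minv d B * (minv d A * A) * B"
    unfolding X_def by (rule assoc4) (use A B a b in auto)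
  also have "\<dots> = 1\<^sub>m d" using a b B right_mult_one_mat[of "minv d B" d d] by auto
  finally have 2: "X * (A * B) = 1\<^sub>m d" .
  show ?thesis unfolding invertible_mat_def inverts_mat_def using 1 2 A B Xc
    by (intro conjI exI[of _ X]) (auto simp: square_mat.simps)
qed

lemma invertible_one: "invertible_mat (1\<^sub>m d :: complex mat)"
  unfolding invertible_mat_def inverts_mat_def by (intro conjI exI[of _ "1\<^sub>m d"]) (auto simp: square_mat.simps)

lemma foldr_GL: assumes K: "Kfield K" and L: "set L \<subseteq> GLK K d"
  shows "foldr (*) L (1\<^sub>m d) \<in> carrier_mat d d \<and> invertible_mat (foldr (*) L (1\<^sub>m d)) \<and> Kmat K d (foldr (*) L (1\<^sub>m d))"
  using L
proof (induction L)
  case Nil thus ?case using invertible_one Kmat_one[OF K] by simp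
next
  case (Cons a L)
  hence a: "Kmat K d a" "invertible_mat a" and IH: "foldr (*) L (1\<^sub>m d) \<in> carrier_mat d d"
    "invertible_mat (foldr (*) L (1\<^sub>m d))" "Kmat K d (foldr (*) L (1\<^sub>m d))"
    by (auto simp: GLK_def)
  have ac: "a \<in> carrier_mat d d" using a by (simp add: Kmat_def)
  show ?case using invertible_mult[OF ac IH(1) a(2) IH(2)] Kmat_mult[OF K a(1) IH(3)] ac IH(1) by simp
qed



lemma PK_carrier: "v \<in> PK K d \<Longrightarrow> v \<in> carrier_vec d \<and> v \<noteq> 0\<^sub>v d"
  by (simp add: PK_def Kvec_def)

lemma sub_clos: assumes "projset K d U" shows "U \<subseteq> closP K d U"
proof
  fix x assume x: "x \<in> U"
  hence xP: "x \<in> PK K d" using assms by (auto simp: projset_def)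
  have "dP x x = 0" using PK_carrier[OF xP] dP_self by blast
  hence "\<forall>r>0. \<exists>y\<in>U. dP x y < r" using x by force
  thus "x \<in> closP K d U" using xP by (simp add: closP_def)
qed

lemma mv_zero: "A \<in> carrier_mat n d \<Longrightarrow> A *\<^sub>v 0\<^sub>v d = 0\<^sub>v n"
  by (intro eq_vecI) (auto simp: scalar_prod_def)

lemma foldr_carrier: "set L \<subseteq> carrier_mat d d \<Longrightarrow> foldr (*) L (1\<^sub>m d) \<in> carrier_mat d d"
  by (induction L) auto

lemma reduced_Cons: assumes r: "reduced d \<Gamma> (\<gamma> # R)" and R: "R \<noteq> []"
  shows "reduced d \<Gamma> R" "\<forall>j\<in>{1,2}. \<not> (\<gamma> \<in> \<Gamma> j \<and> hd R \<in> \<Gamma> j)"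
proof -
  have r1: "\<And>k. k < length (\<gamma> # R) \<Longrightarrow> (\<gamma> # R) ! k \<in> (\<Gamma> 1 \<union> \<Gamma> 2) - {1\<^sub>m d}"
    using r unfolding reduced_def by blast
  have r2: "\<And>k j. k + 1 < length (\<gamma> # R) \<Longrightarrow> j \<in> {1,2} \<Longrightarrow> \<not> ((\<gamma> # R) ! k \<in> \<Gamma> j \<and> (\<gamma> # R) ! (k+1) \<in> \<Gamma> j)"
    using r unfolding reduced_def by blast
  show "reduced d \<Gamma> R" unfolding reduced_def
  proof (intro conjI allI impI ballI)
    show "R \<noteq> []" by fact
    fix k assume "k < length R"
    hence "Suc k < length (\<gamma> # R)" by simp
    from r1[OF this] show "R ! k \<in> \<Gamma> 1 \<union> \<Gamma> 2 - {1\<^sub>m d}" by simp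
  next
    fix k j assume k: "k + 1 < length R" and j: "j \<in> {1::nat,2}"
    hence "Suc k + 1 < length (\<gamma> # R)" by simp
    from r2[OF this j] show "\<not> (R ! k \<in> \<Gamma> j \<and> R ! (k + 1) \<in> \<Gamma> j)" by simp
  qed
  have "0 + 1 < length (\<gamma> # R)" using R by simp
  moreover have "(\<gamma> # R) ! (0 + 1) = hd R" using R by (cases R) auto
  ultimately show "\<forall>j\<in>{1,2}. \<not> (\<gamma> \<in> \<Gamma> j \<and> hd R \<in> \<Gamma> j)" using r2[of 0] by auto
qed

lemma reduced_mem: assumes "reduced d \<Gamma> L" "x \<in> set L" shows "x \<in> \<Gamma> 1 \<union> \<Gamma> 2 - {1\<^sub>m d}"
proof -
  obtain k where "k < length L" "L ! k = x" using assms(2) by (auto simp: in_set_conv_nth)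
  thus ?thesis using assms(1) unfolding reduced_def by blast
qed

lemma reduced_hd: "reduced d \<Gamma> L \<Longrightarrow> hd L \<in> \<Gamma> 1 \<union> \<Gamma> 2 - {1\<^sub>m d}"
  using reduced_mem[of d \<Gamma> L "hd L"] by (simp add: reduced_def)

lemma reduced_next: assumes r: "reduced d \<Gamma> (\<gamma> # R)" and R: "R \<noteq> []" and a: "a \<in> {1,2}" and ga: "\<gamma> \<in> \<Gamma> a"
  obtains c where "c \<in> {1,2}" "c \<noteq> a" "hd R \<in> \<Gamma> c" "\<forall>j\<in>{1,2}. hd R \<in> \<Gamma> j \<longrightarrow> j = c"
proof -
  have h: "hd R \<in> \<Gamma> 1 \<union> \<Gamma> 2" using reduced_hd[OF reduced_Cons(1)[OF r R]] by auto
  have n: "hd R \<notin> \<Gamma> a" using reduced_Cons(2)[OF r R] a ga by auto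
  define c where "c = (if a = 1 then (2::nat) else 1)"
  have "c \<in> {1,2}" "c \<noteq> a" "hd R \<in> \<Gamma> c" "\<forall>j\<in>{1,2}. hd R \<in> \<Gamma> j \<longrightarrow> j = c"
    using h n a by (auto simp: c_def)
  thus ?thesis using that by blast
qed

lemma ppD: "pingpong K d \<Gamma> U V \<Longrightarrow> i \<in> {1,2} \<Longrightarrow> j \<in> {1,2} \<Longrightarrow> i \<noteq> j \<Longrightarrow> \<gamma> \<in> \<Gamma> i - {1\<^sub>m d} \<Longrightarrow>
   actP \<gamma> (closP K d (U j)) \<subseteq> U i \<and> actH K d (minv d \<gamma>) (closP K d (V j)) \<subseteq> V i"
  unfolding pingpong_def by blast

lemma chainP:
  assumes sub: "\<forall>i\<in>{1,2}. \<Gamma> i \<subseteq> carrier_mat d d" and pp: "pingpong K d \<Gamma> U V"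
    and pU: "\<forall>i\<in>{1,2}. projset K d (U i)"
  shows "reduced d \<Gamma> L \<Longrightarrow> a \<in> {1,2} \<Longrightarrow> hd L \<in> \<Gamma> a \<Longrightarrow> (\<forall>j\<in>{1,2}. hd L \<in> \<Gamma> j \<longrightarrow> j = a) \<Longrightarrow>
    b \<in> {1,2} \<Longrightarrow> b' \<in> {1,2} \<Longrightarrow> b \<noteq> b' \<Longrightarrow> last L \<in> \<Gamma> b' \<Longrightarrow> p \<in> closP K d (U b) \<Longrightarrow>
    foldr (*) L (1\<^sub>m d) *\<^sub>v p \<in> U a"
proof (induction L arbitrary: a)
  case Nil thus ?case by (simp add: reduced_def)
next
  case (Cons \<gamma> R)
  have g1: "\<gamma> \<noteq> 1\<^sub>m d" using reduced_hd[OF Cons.prems(1)] by simp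
  have ga: "\<gamma> \<in> \<Gamma> a" using Cons.prems(3) by simp
  have gam: "\<gamma> \<in> \<Gamma> a - {1\<^sub>m d}" using ga g1 by simp
  have gc: "\<gamma> \<in> carrier_mat d d" using Cons.prems(2) ga sub by auto
  have pP: "p \<in> PK K d" using Cons.prems(9) by (simp add: closP_def)
  have pc: "p \<in> carrier_vec d" using PK_carrier[OF pP] by simp
  show ?case
  proof (cases "R = []")
    case True
    have "last (\<gamma> # R) = \<gamma>" using True by simp
    hence gb: "\<gamma> \<in> \<Gamma> b'" using Cons.prems(8) by simp
    have hu: "\<forall>j\<in>{1,2}. \<gamma> \<in> \<Gamma> j \<longrightarrow> j = a" using Cons.prems(4) by simp
    hence "b' = a" using Cons.prems(6) gb by blast
    hence ab: "a \<noteq> b" using Cons.prems(7) by simp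
    have "actP \<gamma> (closP K d (U b)) \<subseteq> U a" using ppD[OF pp Cons.prems(2,5) ab gam] by blast
    hence "\<gamma> *\<^sub>v p \<in> U a" using Cons.prems(9) unfolding actP_def by blast
    moreover have "foldr (*) (\<gamma> # R) (1\<^sub>m d) = \<gamma>" using True gc by (simp add: right_mult_one_mat)
    ultimately show ?thesis by simp
  next
    case False
    obtain c where c: "c \<in> {1,2}" "c \<noteq> a" "hd R \<in> \<Gamma> c" "\<forall>j\<in>{1,2}. hd R \<in> \<Gamma> j \<longrightarrow> j = c"
      by (rule reduced_next[OF Cons.prems(1) False Cons.prems(2) ga])
    have lR: "last R \<in> \<Gamma> b'" using Cons.prems(8) False by simp
    have IH: "foldr (*) R (1\<^sub>m d) *\<^sub>v p \<in> U c"
      by (rule Cons.IH[OF reduced_Cons(1)[OF Cons.prems(1) False] c(1) c(3) c(4) Cons.prems(5,6,7) lR Cons.prems(9)])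
    have "U c \<subseteq> closP K d (U c)" using sub_clos pU c(1) by blast
    hence IH': "foldr (*) R (1\<^sub>m d) *\<^sub>v p \<in> closP K d (U c)" using IH by blast
    have ac: "a \<noteq> c" using c(2) by simp
    have "actP \<gamma> (closP K d (U c)) \<subseteq> U a" using ppD[OF pp Cons.prems(2) c(1) ac gam] by blast
    hence 1: "\<gamma> *\<^sub>v (foldr (*) R (1\<^sub>m d) *\<^sub>v p) \<in> U a" using IH' unfolding actP_def by blast
    have "set R \<subseteq> carrier_mat d d"
    proof
      fix x assume "x \<in> set R"
      hence "x \<in> \<Gamma> 1 \<union> \<Gamma> 2" using reduced_mem[OF Cons.prems(1)] by simp
      thus "x \<in> carrier_mat d d" using sub by blast
    qed
    hence Fc: "foldr (*) R (1\<^sub>m d) \<in> carrier_mat d d" by (rule foldr_carrier)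
    have "foldr (*) (\<gamma> # R) (1\<^sub>m d) *\<^sub>v p = (\<gamma> * foldr (*) R (1\<^sub>m d)) *\<^sub>v p" by simp
    also have "\<dots> = \<gamma> *\<^sub>v (foldr (*) R (1\<^sub>m d) *\<^sub>v p)" by (rule assoc_mult_mat_vec[OF gc Fc pc])
    finally show ?thesis using 1 by simp
  qed
qed

lemma hstep:
  assumes K: "Kfield K" and gG: "\<gamma> \<in> GLK K d" and u: "u \<in> PK K d"
  shows "cadj \<gamma> *\<^sub>v u \<in> actH K d (minv d \<gamma>) {u}"
proof -
  have gK: "Kmat K d \<gamma>" and gi: "invertible_mat \<gamma>" using gG by (auto simp: GLK_def)
  have gc: "\<gamma> \<in> carrier_mat d d" using gK by (simp add: Kmat_def)
  note sp = minv_spec[OF gc gi]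
  have mK: "Kmat K d (minv d \<gamma>)" using Kmat_minv[OF K gK gi] .
  have uc: "u \<in> carrier_vec d" and u0: "u \<noteq> 0\<^sub>v d" using PK_carrier[OF u] by auto
  define w where "w = cadj \<gamma> *\<^sub>v u"
  have wK: "Kvec K d w" unfolding w_def using Kmat_mv[OF K Kmat_cadj[OF K gK]] u by (simp add: PK_def)
  have wc: "w \<in> carrier_vec d" using wK by (simp add: Kvec_def)
  have w0: "w \<noteq> 0\<^sub>v d"
  proof
    assume w0: "w = 0\<^sub>v d"
    have "cadj (\<gamma> * minv d \<gamma>) = cadj (minv d \<gamma>) * cadj \<gamma>" using sp gc by (intro cadj_mult) auto
    hence "cadj (minv d \<gamma>) * cadj \<gamma> = 1\<^sub>m d" using sp by simp
    hence "u = (cadj (minv d \<gamma>) * cadj \<gamma>) *\<^sub>v u" using uc by simp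
    also have "\<dots> = cadj (minv d \<gamma>) *\<^sub>v w" unfolding w_def using sp gc uc
      by (simp add: assoc_mult_mat_vec[of _ d d _ d])
    also have "\<dots> = 0\<^sub>v d" using w0 sp mv_zero[of "cadj (minv d \<gamma>)" d d] by simp
    finally show False using u0 by simp
  qed
  have "(\<lambda>x. minv d \<gamma> *\<^sub>v x) ` hyp K d u = hyp K d w"
  proof (intro equalityI subsetI)
    fix z assume "z \<in> (\<lambda>x. minv d \<gamma> *\<^sub>v x) ` hyp K d u"
    then obtain x where x: "x \<in> hyp K d u" and z: "z = minv d \<gamma> *\<^sub>v x" by auto
    have xK: "Kvec K d x" and x0: "hinner x u = 0" using x by (auto simp: hyp_def)
    have xc: "x \<in> carrier_vec d" using xK by (simp add: Kvec_def)
    have zc: "z \<in> carrier_vec d" unfolding z using sp xc by (meson mult_mat_vec_carrier)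
    have "hinner z w = hinner (\<gamma> *\<^sub>v z) u" unfolding w_def using hinner_adj[OF gc zc uc] by simp
    also have "\<gamma> *\<^sub>v z = (\<gamma> * minv d \<gamma>) *\<^sub>v x" unfolding z
      by (rule assoc_mult_mat_vec[symmetric], use sp gc xc in auto)
    also have "\<dots> = x" using sp xc by simp
    finally have "hinner z w = 0" using x0 by simp
    moreover have "Kvec K d z" unfolding z using Kmat_mv[OF K mK xK] .
    ultimately show "z \<in> hyp K d w" by (simp add: hyp_def)
  next
    fix z assume "z \<in> hyp K d w"
    hence zK: "Kvec K d z" and z0: "hinner z w = 0" by (auto simp: hyp_def)
    have zc: "z \<in> carrier_vec d" using zK by (simp add: Kvec_def)
    have "hinner (\<gamma> *\<^sub>v z) u = hinner z w" unfolding w_def using hinner_adj[OF gc zc uc] by simp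
    hence "\<gamma> *\<^sub>v z \<in> hyp K d u" using z0 Kmat_mv[OF K gK zK] by (simp add: hyp_def)
    moreover have "minv d \<gamma> *\<^sub>v (\<gamma> *\<^sub>v z) = (minv d \<gamma> * \<gamma>) *\<^sub>v z"
      by (rule assoc_mult_mat_vec[symmetric], use sp gc zc in auto)
    hence "z = minv d \<gamma> *\<^sub>v (\<gamma> *\<^sub>v z)" using sp zc by simp
    ultimately show "z \<in> (\<lambda>x. minv d \<gamma> *\<^sub>v x) ` hyp K d u" by blast
  qed
  moreover have "w \<in> PK K d" using wK w0 by (simp add: PK_def)
  ultimately have "w \<in> actH K d (minv d \<gamma>) {u}" unfolding actH_def by blast
  thus ?thesis by (simp add: w_def)
qed

lemma chainH:
  assumes K: "Kfield K" and GL: "\<forall>i\<in>{1,2}. \<Gamma> i \<subseteq> GLK K d" and pp: "pingpong K d \<Gamma> U V"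
    and pV: "\<forall>i\<in>{1,2}. projset K d (V i)"
  shows "reduced d \<Gamma> L \<Longrightarrow> a \<in> {1,2} \<Longrightarrow> hd L \<in> \<Gamma> a \<Longrightarrow> b \<in> {1,2} \<Longrightarrow> b \<noteq> a \<Longrightarrow>
    i \<in> {1,2} \<Longrightarrow> last L \<in> \<Gamma> i \<Longrightarrow> (\<forall>j\<in>{1,2}. last L \<in> \<Gamma> j \<longrightarrow> j = i) \<Longrightarrow>
    u \<in> closP K d (V b) \<Longrightarrow> cadj (foldr (*) L (1\<^sub>m d)) *\<^sub>v u \<in> V i"
proof (induction L arbitrary: a b u)
  case Nil thus ?case by (simp add: reduced_def)
next
  case (Cons \<gamma> R)
  have g1: "\<gamma> \<noteq> 1\<^sub>m d" using reduced_hd[OF Cons.prems(1)] by simp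
  have ga: "\<gamma> \<in> \<Gamma> a" using Cons.prems(3) by simp
  have gam: "\<gamma> \<in> \<Gamma> a - {1\<^sub>m d}" using ga g1 by simp
  have gG: "\<gamma> \<in> GLK K d" using Cons.prems(2) ga GL by auto
  have gc: "\<gamma> \<in> carrier_mat d d" using gG by (simp add: GLK_def Kmat_def)
  have uP: "u \<in> PK K d" using Cons.prems(9) by (simp add: closP_def)
  have uc: "u \<in> carrier_vec d" using PK_carrier[OF uP] by simp
  have ab: "a \<noteq> b" using Cons.prems(5) by simp
  have sub1: "actH K d (minv d \<gamma>) (closP K d (V b)) \<subseteq> V a" using ppD[OF pp Cons.prems(2,4) ab gam] by blast
  have sub2: "actH K d (minv d \<gamma>) {u} \<subseteq> actH K d (minv d \<gamma>) (closP K d (V b))"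
    using Cons.prems(9) unfolding actH_def by blast
  have step: "cadj \<gamma> *\<^sub>v u \<in> V a" using hstep[OF K gG uP] sub1 sub2 by blast
  show ?case
  proof (cases "R = []")
    case True
    have "last (\<gamma> # R) = \<gamma>" using True by simp
    hence "\<gamma> \<in> \<Gamma> i" "\<forall>j\<in>{1,2}. \<gamma> \<in> \<Gamma> j \<longrightarrow> j = i" using Cons.prems(7,8) by auto
    hence "i = a" using Cons.prems(2) ga by blast
    moreover have "foldr (*) (\<gamma> # R) (1\<^sub>m d) = \<gamma>" using True gc by (simp add: right_mult_one_mat)
    ultimately show ?thesis using step by simp
  next
    case False
    obtain c where c: "c \<in> {1,2}" "c \<noteq> a" "hd R \<in> \<Gamma> c" "\<forall>j\<in>{1,2}. hd R \<in> \<Gamma> j \<longrightarrow> j = c"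
      by (rule reduced_next[OF Cons.prems(1) False Cons.prems(2) ga])
    have "V a \<subseteq> closP K d (V a)" using sub_clos pV Cons.prems(2) by blast
    hence st': "cadj \<gamma> *\<^sub>v u \<in> closP K d (V a)" using step by blast
    have lR: "last R \<in> \<Gamma> i" "\<forall>j\<in>{1,2}. last R \<in> \<Gamma> j \<longrightarrow> j = i" using Cons.prems(7,8) False by auto
    have ca: "a \<noteq> c" using c(2) by simp
    have IH: "cadj (foldr (*) R (1\<^sub>m d)) *\<^sub>v (cadj \<gamma> *\<^sub>v u) \<in> V i"
      by (rule Cons.IH[OF reduced_Cons(1)[OF Cons.prems(1) False] c(1) c(3) Cons.prems(2) ca Cons.prems(6) lR st'])
    have "set R \<subseteq> carrier_mat d d"
    proof
      fix x assume "x \<in> set R"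
      hence "x \<in> \<Gamma> 1 \<union> \<Gamma> 2" using reduced_mem[OF Cons.prems(1)] by simp
      thus "x \<in> carrier_mat d d" using GL by (auto simp: GLK_def Kmat_def)
    qed
    hence Fc: "foldr (*) R (1\<^sub>m d) \<in> carrier_mat d d" by (rule foldr_carrier)
    have "cadj (foldr (*) (\<gamma> # R) (1\<^sub>m d)) = cadj (foldr (*) R (1\<^sub>m d)) * cadj \<gamma>"
      using cadj_mult[OF gc Fc] by simp
    hence "cadj (foldr (*) (\<gamma> # R) (1\<^sub>m d)) *\<^sub>v u = cadj (foldr (*) R (1\<^sub>m d)) *\<^sub>v (cadj \<gamma> *\<^sub>v u)"
      using assoc_mult_mat_vec[OF cadj_carrier[OF Fc] cadj_carrier[OF gc] uc] by simp
    thus ?thesis using IH by simp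
  qed
qed



definition dec :: "nat \<Rightarrow> complex mat \<Rightarrow> complex mat \<Rightarrow> (nat \<Rightarrow> real) \<Rightarrow> complex mat \<Rightarrow> bool" where
  "dec d g A e B \<longleftrightarrow> unit d A \<and> unit d B \<and> (\<forall>i<d. 0 \<le> e i) \<and> (\<forall>i j. i \<le> j \<longrightarrow> j < d \<longrightarrow> e j \<le> e i) \<and>
     g = A * mat_diag d (\<lambda>i. complex_of_real (e i)) * B"

lemma cadj_mv_carrier[simp]: "B \<in> carrier_mat d d \<Longrightarrow> z \<in> carrier_vec d \<Longrightarrow> cadj B *\<^sub>v z \<in> carrier_vec d"
  by (metis cadj_carrier mult_mat_vec_carrier)

lemma cartan_dec: "cartan K d g k \<sigma> k' \<Longrightarrow> dec d g k \<sigma> k'"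
  by (auto simp: cartan_def dec_def unitaryK_unit)

lemma dec_norm: assumes "dec d g A e B" and v: "v \<in> carrier_vec d"
  shows "nrm2 (g *\<^sub>v v) = (\<Sum>i<d. (e i)\<^sup>2 * (cmod ((B *\<^sub>v v) $ i))\<^sup>2)"
proof -
  have A: "unit d A" and B: "unit d B" and g: "g = A * mat_diag d (\<lambda>i. complex_of_real (e i)) * B"
    using assms by (auto simp: dec_def)
  show ?thesis unfolding g using norm_formula[OF A unit_carrier[OF B] v] by simp
qed

lemma dec_top: assumes D: "dec d g A e B" and d: "0 < d" and v: "v \<in> carrier_vec d"
  shows "nrm2 (g *\<^sub>v v) \<le> (e 0)\<^sup>2 * nrm2 v"
proof -
  have B: "unit d B" using D by (simp add: dec_def)
  have "nrm2 (g *\<^sub>v v) \<le> (\<Sum>i<d. (e 0)\<^sup>2 * (cmod ((B *\<^sub>v v) $ i))\<^sup>2)"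
    unfolding dec_norm[OF D v]
  proof (rule sum_mono)
    fix i assume "i \<in> {..<d}"
    hence "0 \<le> e i" "e i \<le> e 0" using D by (auto simp: dec_def)
    hence "(e i)\<^sup>2 \<le> (e 0)\<^sup>2" by (intro power_mono) auto
    thus "(e i)\<^sup>2 * (cmod ((B *\<^sub>v v) $ i))\<^sup>2 \<le> (e 0)\<^sup>2 * (cmod ((B *\<^sub>v v) $ i))\<^sup>2"
      by (intro mult_right_mono) auto
  qed
  also have "\<dots> = (e 0)\<^sup>2 * nrm2 (B *\<^sub>v v)"
    using unit_carrier[OF B] v by (simp add: nrm2_sum[of _ d] sum_distrib_left)
  also have "\<dots> = (e 0)\<^sup>2 * nrm2 v" using unit_nrm2[OF B v] by simp
  finally show ?thesis .
qed

lemma dec_second: assumes D: "dec d g A e B" and d: "1 < d" and v: "v \<in> carrier_vec d"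
  and v0: "(B *\<^sub>v v) $ 0 = 0"
  shows "nrm2 (g *\<^sub>v v) \<le> (e 1)\<^sup>2 * nrm2 v"
proof -
  have B: "unit d B" using D by (simp add: dec_def)
  have "nrm2 (g *\<^sub>v v) \<le> (\<Sum>i<d. (e 1)\<^sup>2 * (cmod ((B *\<^sub>v v) $ i))\<^sup>2)"
    unfolding dec_norm[OF D v]
  proof (rule sum_mono)
    fix i assume i: "i \<in> {..<d}"
    show "(e i)\<^sup>2 * (cmod ((B *\<^sub>v v) $ i))\<^sup>2 \<le> (e 1)\<^sup>2 * (cmod ((B *\<^sub>v v) $ i))\<^sup>2"
    proof (cases "i = 0")
      case True thus ?thesis using v0 by simp
    next
      case False
      hence "0 \<le> e i" "e i \<le> e 1" using D i by (auto simp: dec_def)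
      hence "(e i)\<^sup>2 \<le> (e 1)\<^sup>2" by (intro power_mono) auto
      thus ?thesis by (intro mult_right_mono) auto
    qed
  qed
  also have "\<dots> = (e 1)\<^sup>2 * nrm2 (B *\<^sub>v v)"
    using unit_carrier[OF B] v by (simp add: nrm2_sum[of _ d] sum_distrib_left)
  also have "\<dots> = (e 1)\<^sup>2 * nrm2 v" using unit_nrm2[OF B v] by simp
  finally show ?thesis .
qed

lemma dec_low: assumes D: "dec d g A e B" and d: "1 < d" and z: "z \<in> carrier_vec d"
  and z2: "\<forall>i. 2 \<le> i \<longrightarrow> i < d \<longrightarrow> z $ i = 0"
  shows "(e 1)\<^sup>2 * nrm2 z \<le> nrm2 (g *\<^sub>v (cadj B *\<^sub>v z))"
proof -
  have B: "unit d B" using D by (simp add: dec_def)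
  have Bc: "B \<in> carrier_mat d d" using unit_carrier[OF B] .
  have vc: "cadj B *\<^sub>v z \<in> carrier_vec d" using Bc z by (meson cadj_carrier mult_mat_vec_carrier)
  have Bv: "B *\<^sub>v (cadj B *\<^sub>v z) = z" using unit_inv_right[OF B z] .
  have "(e 1)\<^sup>2 * nrm2 z = (\<Sum>i<d. (e 1)\<^sup>2 * (cmod (z $ i))\<^sup>2)"
    using z by (simp add: nrm2_sum[of _ d] sum_distrib_left)
  also have "\<dots> \<le> (\<Sum>i<d. (e i)\<^sup>2 * (cmod (z $ i))\<^sup>2)"
  proof (rule sum_mono)
    fix i assume i: "i \<in> {..<d}"
    show "(e 1)\<^sup>2 * (cmod (z $ i))\<^sup>2 \<le> (e i)\<^sup>2 * (cmod (z $ i))\<^sup>2"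
    proof (cases "i \<le> 1")
      case True
      hence "0 \<le> e 1" "e 1 \<le> e i" using D i d by (auto simp: dec_def)
      hence "(e 1)\<^sup>2 \<le> (e i)\<^sup>2" by (intro power_mono) auto
      thus ?thesis by (intro mult_right_mono) auto
    next
      case False thus ?thesis using z2 i by auto
    qed
  qed
  also have "\<dots> = nrm2 (g *\<^sub>v (cadj B *\<^sub>v z))" unfolding dec_norm[OF D vc] Bv ..
  finally show ?thesis .
qed

lemma dec_le: assumes D1: "dec d g A e B" and D2: "dec d g A2 f B2" and d: "1 < d"
  shows "e 0 \<le> f 0 \<and> e 1 \<le> f 1"
proof
  have B: "unit d B" and B2: "unit d B2" using D1 D2 by (auto simp: dec_def)
  have Bc: "B \<in> carrier_mat d d" and B2c: "B2 \<in> carrier_mat d d" using B B2 unit_carrier by auto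
  have e0: "0 \<le> e 0" "0 \<le> e 1" and f0: "0 \<le> f 0" "0 \<le> f 1" using D1 D2 d by (auto simp: dec_def)
  define z :: "complex vec" where "z = unit_vec d 0"
  have zc: "z \<in> carrier_vec d" by (simp add: z_def)
  have "nrm2 z = (\<Sum>i<d. if i = 0 then 1 else 0)"
    unfolding nrm2_sum[OF zc] by (rule sum.cong) (auto simp: z_def)
  hence nz: "nrm2 z = 1" using d by simp
  have "(e 0)\<^sup>2 * nrm2 z \<le> nrm2 (g *\<^sub>v (cadj B *\<^sub>v z))"
  proof -
    have vc: "cadj B *\<^sub>v z \<in> carrier_vec d" using Bc zc by (meson cadj_carrier mult_mat_vec_carrier)
    have Bv: "B *\<^sub>v (cadj B *\<^sub>v z) = z" using unit_inv_right[OF B zc] .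
    have "nrm2 (g *\<^sub>v (cadj B *\<^sub>v z)) = (\<Sum>i<d. (e i)\<^sup>2 * (cmod (z $ i))\<^sup>2)" unfolding dec_norm[OF D1 vc] Bv ..
    also have "\<dots> = (\<Sum>i<d. if i = 0 then (e 0)\<^sup>2 else 0)"
      by (rule sum.cong) (auto simp: z_def)
    also have "\<dots> = (e 0)\<^sup>2" using d by simp
    finally show ?thesis using nz by simp
  qed
  also have "\<dots> \<le> (f 0)\<^sup>2 * nrm2 (cadj B *\<^sub>v z)"
    by (rule dec_top[OF D2]) (use d Bc zc in auto)
  also have "nrm2 (cadj B *\<^sub>v z) = nrm2 z" using unit_nrm2[OF unit_cadj[OF B] zc] .
  finally have "(e 0)\<^sup>2 \<le> (f 0)\<^sup>2" using nz by simp
  thus "e 0 \<le> f 0" using e0 f0 by (simp add: power2_le_iff_abs_le)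
next
  have B: "unit d B" and B2: "unit d B2" using D1 D2 by (auto simp: dec_def)
  have Bc: "B \<in> carrier_mat d d" and B2c: "B2 \<in> carrier_mat d d" using B B2 unit_carrier by auto
  have e0: "0 \<le> e 0" "0 \<le> e 1" and f0: "0 \<le> f 0" "0 \<le> f 1" using D1 D2 d by (auto simp: dec_def)
  define M where "M = B2 * cadj B"
  have Mc: "M \<in> carrier_mat d d" using B2c Bc by (simp add: M_def)
  define c0 where "c0 = (if M $$ (0,0) = 0 \<and> M $$ (0,1) = 0 then 1 else M $$ (0,1))"
  define c1 where "c1 = (if M $$ (0,0) = 0 \<and> M $$ (0,1) = 0 then 0 else - M $$ (0,0))"
  have cc: "M $$ (0,0) * c0 + M $$ (0,1) * c1 = 0" by (simp add: c0_def c1_def)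
  have c01: "c0 \<noteq> 0 \<or> c1 \<noteq> 0" by (auto simp: c0_def c1_def)
  define z where "z = vec d (\<lambda>i. if i = 0 then c0 else if i = 1 then c1 else 0)"
  have zc: "z \<in> carrier_vec d" by (simp add: z_def)
  have z2: "\<forall>i. 2 \<le> i \<longrightarrow> i < d \<longrightarrow> z $ i = 0" by (simp add: z_def)
  have nz: "0 < nrm2 z"
  proof (rule nrm2_pos[OF zc])
    show "z \<noteq> 0\<^sub>v d"
    proof
      assume "z = 0\<^sub>v d"
      hence "z $ 0 = 0" "z $ 1 = 0" using d by auto
      thus False using c01 d by (simp add: z_def)
    qed
  qed
  define v where "v = cadj B *\<^sub>v z"
  have vc: "v \<in> carrier_vec d" using Bc zc by (simp add: v_def)
  have "(B2 *\<^sub>v v) $ 0 = (M *\<^sub>v z) $ 0"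
    unfolding v_def M_def by (subst assoc_mult_mat_vec[OF B2c cadj_carrier[OF Bc] zc]) simp
  also have "\<dots> = (\<Sum>j<d. M $$ (0,j) * z $ j)" using mvsum[OF Mc zc] d by simp
  also have "\<dots> = (\<Sum>j<d. if j = 0 then M $$ (0,0) * c0 else if j = 1 then M $$ (0,1) * c1 else 0)"
    by (rule sum.cong) (auto simp: z_def)
  also have "\<dots> = M $$ (0,0) * c0 + M $$ (0,1) * c1"
  proof -
    have "{..<d} = {0,1} \<union> {2..<d}" using d by auto
    thus ?thesis by (simp add: sum.union_disjoint)
  qed
  also have "\<dots> = 0" using cc .
  finally have v0: "(B2 *\<^sub>v v) $ 0 = 0" .
  have "(e 1)\<^sup>2 * nrm2 z \<le> nrm2 (g *\<^sub>v v)" unfolding v_def by (rule dec_low[OF D1 d zc z2])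
  also have "\<dots> \<le> (f 1)\<^sup>2 * nrm2 v" by (rule dec_second[OF D2 d vc v0])
  also have "nrm2 v = nrm2 z" unfolding v_def using unit_nrm2[OF unit_cadj[OF B] zc] .
  finally have "(e 1)\<^sup>2 \<le> (f 1)\<^sup>2" using nz by simp
  thus "e 1 \<le> f 1" using e0 f0 by (simp add: power2_le_iff_abs_le)
qed

lemma dec_eq: assumes "dec d g A e B" "dec d g A2 f B2" "1 < d"
  shows "e 0 = f 0 \<and> e 1 = f 1"
  using dec_le[OF assms(1,2,3)] dec_le[OF assms(2,1,3)] by auto



lemma hinner_minus_right: "u \<in> carrier_vec d \<Longrightarrow> v \<in> carrier_vec d \<Longrightarrow> w \<in> carrier_vec d \<Longrightarrow>
   hinner u (v - w) = hinner u v - hinner u w"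
  by (subst hinner_sum[of "v - w" d]) (auto simp: hinner_sum sum_subtractf algebra_simps)

lemma hinner_add_right: "u \<in> carrier_vec d \<Longrightarrow> v \<in> carrier_vec d \<Longrightarrow> w \<in> carrier_vec d \<Longrightarrow>
   hinner u (v + w) = hinner u v + hinner u w"
  by (subst hinner_sum[of "v + w" d]) (auto simp: hinner_sum sum.distrib algebra_simps)

lemma hinner_K: assumes K: "Kfield K" and u: "Kvec K d u" and v: "Kvec K d v" shows "hinner u v \<in> K"
  using u v unfolding hinner_sum[OF Kvec_carrier[OF v]]
  by (auto simp: Kvec_def intro!: Kc_sum[OF K] Kc_mult[OF K] Kc_cnj[OF K])

lemma dP_sub: assumes u: "u \<in> carrier_vec d" "u \<noteq> 0\<^sub>v d" and v: "v \<in> carrier_vec d" "v \<noteq> 0\<^sub>v d"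
  shows "dP u v \<le> sqrt (nrm2 (u - v) / nrm2 u)"
proof -
  define N where "N = nrm2 u"
  define m where "m = nrm2 v"
  define s where "s = hinner u v"
  have N: "0 < N" using nrm2_pos[OF u] N_def by simp
  have m: "0 < m" using nrm2_pos[OF v] m_def by simp
  have uv: "u - v \<in> carrier_vec d" using u v by simp
  have "hinner (u - v) (u - v) = hinner u u - hinner u v - (hinner v u - hinner v v)"
    using u v by (simp add: hinner_minus_left hinner_minus_right)
  also have "\<dots> = of_real N - s - cnj s + of_real m"
    using u v by (simp add: hinner_self N_def m_def s_def hinner_cnj[of u d v])
  finally have "nrm2 (u - v) = N - 2 * Re s + m" unfolding nrm2_def by simp
  hence e: "nrm2 (u - v) / nrm2 u = (N - 2 * Re s + m) / N" using N_def by simp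
  have "(cmod s)\<^sup>2 \<ge> (Re s)\<^sup>2" by (simp add: cmod_def)
  moreover have "0 \<le> (Re s - m)\<^sup>2" by simp
  moreover have "m * (N - 2 * Re s + m) - (N * m - (cmod s)\<^sup>2) = (cmod s)\<^sup>2 - (Re s)\<^sup>2 + (Re s - m)\<^sup>2"
    by (simp add: algebra_simps power2_eq_square)
  ultimately have key: "N * m - (cmod s)\<^sup>2 \<le> m * (N - 2 * Re s + m)" by linarith
  have "1 - (cmod s)\<^sup>2 / (N * m) = (N * m - (cmod s)\<^sup>2) / (N * m)" using N m by (simp add: field_simps)
  also have "\<dots> \<le> (m * (N - 2 * Re s + m)) / (N * m)" using key N m by (intro divide_right_mono) auto
  also have "\<dots> = (N - 2 * Re s + m) / N" using m by simp
  finally have "1 - (cmod s)\<^sup>2 / (N * m) \<le> (N - 2 * Re s + m) / N" .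
  thus ?thesis unfolding dP_def e using N_def m_def s_def by simp
qed

lemma hinner_unit: "j < d \<Longrightarrow> z \<in> carrier_vec d \<Longrightarrow> hinner (unit_vec d j) z = cnj (z $ j)"
proof -
  assume j: "j < d" and z: "z \<in> carrier_vec d"
  have "hinner (unit_vec d j) z = (\<Sum>i<d. if i = j then cnj (z $ j) else 0)"
    unfolding hinner_sum[OF z] by (rule sum.cong) (use j in auto)
  thus ?thesis using j by simp
qed

lemma hinner_unit_right: "j < d \<Longrightarrow> z \<in> carrier_vec d \<Longrightarrow> hinner z (unit_vec d j) = z $ j"
proof -
  assume j: "j < d" and z: "z \<in> carrier_vec d"
  have "hinner z (unit_vec d j) = (\<Sum>i<d. if i = j then z $ j else 0)"
    unfolding hinner_sum[OF unit_vec_carrier] by (rule sum.cong) (use j in auto)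
  thus ?thesis using j by simp
qed

lemma nrm2_unit: "j < d \<Longrightarrow> nrm2 (unit_vec d j) = 1"
proof -
  assume j: "j < d"
  have "nrm2 (unit_vec d j) = (\<Sum>i<d. if i = j then 1 else 0)"
    unfolding nrm2_sum[OF unit_vec_carrier] by (rule sum.cong) (use j in auto)
  thus ?thesis using j by simp
qed

lemma dP_unit: assumes j: "j < d" and z: "z \<in> carrier_vec d" and L: "0 < L" "L \<le> (cmod (z $ j))\<^sup>2"
  and S: "(\<Sum>i\<in>{..<d} - {j}. (cmod (z $ i))\<^sup>2) \<le> Bd"
  shows "dP (unit_vec d j) z \<le> sqrt (Bd / L)"
proof -
  define S where "S = (\<Sum>i\<in>{..<d} - {j}. (cmod (z $ i))\<^sup>2)"
  define Z where "Z = (cmod (z $ j))\<^sup>2"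
  have S0: "0 \<le> S" unfolding S_def by (rule sum_nonneg) auto
  have Z0: "0 < Z" using L Z_def by linarith
  have zj: "z $ j \<noteq> 0"
  proof
    assume "z $ j = 0" thus False using Z0 Z_def by simp
  qed
  have n: "nrm2 z = Z + S" unfolding nrm2_sum[OF z] S_def Z_def
    using j by (simp add: sum.remove[of "{..<d}" j])
  have "1 - (cmod (hinner (unit_vec d j) z))\<^sup>2 / (nrm2 (unit_vec d j) * nrm2 z) = 1 - Z / (Z + S)"
    using j z zj by (simp add: hinner_unit nrm2_unit n Z_def)
  also have "\<dots> = S / (Z + S)" using Z0 S0 by (simp add: field_simps)
  also have "\<dots> \<le> S / Z" using Z0 S0 by (intro divide_left_mono) auto
  also have "\<dots> \<le> Bd / L"
  proof -
    have "S \<le> Bd" using S S_def by simp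
    have "S / Z \<le> Bd / Z" using \<open>S \<le> Bd\<close> Z0 by (intro divide_right_mono) auto
    also have "\<dots> \<le> Bd / L" using S0 \<open>S \<le> Bd\<close> L Z0 Z_def by (intro divide_left_mono) (auto intro: mult_pos_pos)
    finally show ?thesis .
  qed
  finally show ?thesis unfolding dP_def by simp
qed

lemma ball_trick: assumes K: "Kfield K" and x: "x \<in> PK K d" and av: "Kvec K d av" and na: "nrm2 av = 1"
  and th: "0 < \<theta>" "\<theta> \<le> 1"
  shows "\<exists>p. p \<in> PK K d \<and> dP x p < \<theta> \<and> hinner p av \<noteq> 0 \<and> nrm2 p \<le> 4 / \<theta>\<^sup>2 * (cmod (hinner p av))\<^sup>2"
proof -
  have xc: "x \<in> carrier_vec d" and x0: "x \<noteq> 0\<^sub>v d" and xK: "Kvec K d x" using x by (auto simp: PK_def Kvec_def)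
  have ac: "av \<in> carrier_vec d" using av by (simp add: Kvec_def)
  define N where "N = nrm2 x"
  have N: "0 < N" using nrm2_pos[OF xc x0] N_def by simp
  define \<alpha> where "\<alpha> = hinner x av"
  define c where "c = (if \<alpha> = 0 then 1 else \<alpha> / of_real (cmod \<alpha>))"
  define t where "t = 2 * \<theta> * sqrt N / 3"
  have sN: "0 < sqrt N" using N by simp
  have t0: "0 < t" using th sN unfolding t_def by simp
  have tt: "t\<^sup>2 = 4 * \<theta>\<^sup>2 * N / 9" using N by (simp add: t_def power_mult_distrib power_divide)
  have cm: "cmod c = 1" by (auto simp: c_def norm_divide)
  have ca: "cnj c * \<alpha> = of_real (cmod \<alpha>)"
  proof (cases "\<alpha> = 0")
    case False
    have "cnj c * \<alpha> = cnj \<alpha> * \<alpha> / of_real (cmod \<alpha>)" using False by (simp add: c_def)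
    also have "cnj \<alpha> * \<alpha> = of_real ((cmod \<alpha>)\<^sup>2)" by (metis complex_norm_square mult.commute of_real_power)
    finally show ?thesis using False by (simp add: power2_eq_square)
  qed (simp add: c_def)
  have ac2: "c * of_real (cmod \<alpha>) = \<alpha>"
  proof (cases "\<alpha> = 0")
    case False thus ?thesis by (simp add: c_def)
  qed (simp add: c_def)
  have cK: "c \<in> K"
  proof -
    have "\<alpha> \<in> K" unfolding \<alpha>_def by (rule hinner_K[OF K xK av])
    thus ?thesis using K by (auto simp: c_def intro!: Kc_divide Kc_real Kc_1)
  qed
  define p where "p = x + (of_real t * c) \<cdot>\<^sub>v av"
  have pc: "p \<in> carrier_vec d" using xc ac by (simp add: p_def)
  have avav: "hinner av av = 1" using hinner_self[OF ac] na by simp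
  have hp: "hinner p av = c * of_real (cmod \<alpha> + t)"
  proof -
    have "hinner p av = \<alpha> + of_real t * c" unfolding p_def using xc ac
      by (simp add: hinner_add_left hinner_smult_left avav \<alpha>_def)
    also have "\<dots> = c * of_real (cmod \<alpha> + t)" using ac2 by (simp add: algebra_simps)
    finally show ?thesis .
  qed
  have hpn: "cmod (hinner p av) = cmod \<alpha> + t" using t0 cm unfolding hp norm_mult
    by (simp del: of_real_add)
  have hp0: "hinner p av \<noteq> 0"
  proof
    assume "hinner p av = 0"
    hence "cmod \<alpha> + t = 0" using hpn by simp
    moreover have "0 \<le> cmod \<alpha>" by simp
    ultimately show False using t0 by linarith
  qed
  have np: "nrm2 p = N + 2 * t * cmod \<alpha> + t\<^sup>2"
  proof -
    have "hinner p p = hinner x x + of_real t * c * hinner av x + cnj (of_real t * c) * hinner x av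
        + of_real t * c * (cnj (of_real t * c) * hinner av av)"
      unfolding p_def using xc ac
      by (simp add: hinner_add_left hinner_add_right hinner_smult_left hinner_smult_right algebra_simps)
    also have "hinner av x = cnj \<alpha>" using xc ac by (simp add: \<alpha>_def hinner_cnj[of x d av])
    also have "of_real t * c * cnj \<alpha> = of_real t * cnj (cnj c * \<alpha>)" by simp
    also have "cnj (of_real t * c) * hinner x av = of_real t * (cnj c * \<alpha>)" by (simp add: \<alpha>_def)
    also have "of_real t * c * (cnj (of_real t * c) * hinner av av) = of_real t * of_real t * (c * cnj c)"
      by (simp add: avav algebra_simps)
    also have "c * cnj c = 1" using complex_norm_square[of c] cm by simp
    also have "of_real t * of_real t * (1::complex) = of_real (t\<^sup>2)" by (simp add: power2_eq_square)
    finally have "hinner p p = of_real N + of_real (2 * t * cmod \<alpha>) + of_real (t\<^sup>2)"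
      using cm hinner_self[OF xc] by (simp add: ca N_def)
    thus ?thesis unfolding nrm2_def by simp
  qed
  have "nrm2 p \<le> 4 / \<theta>\<^sup>2 * (cmod (hinner p av))\<^sup>2"
  proof -
    have th2: "\<theta>\<^sup>2 \<le> 1" using th by (simp add: power_le_one)
    have q: "4 / \<theta>\<^sup>2 \<ge> 1" using th th2 by (simp add: field_simps)
    have a0: "0 \<le> cmod \<alpha>" by simp
    have "N + 2 * t * cmod \<alpha> + t\<^sup>2 \<le> 4 / \<theta>\<^sup>2 * t\<^sup>2 + 2 * t * cmod \<alpha>"
    proof -
      have A: "4 / \<theta>\<^sup>2 * t\<^sup>2 = 16 * N / 9" using th by (simp add: tt field_simps)
      have B: "t\<^sup>2 \<le> 4 * N / 9" using tt th2 N by (simp add: mult_le_cancel_right1 field_simps)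
      show ?thesis unfolding A using B N by linarith
    qed
    also have "\<dots> \<le> 4 / \<theta>\<^sup>2 * (t\<^sup>2 + 2 * t * cmod \<alpha> + (cmod \<alpha>)\<^sup>2)"
    proof -
      have "2 * t * cmod \<alpha> \<le> 4 / \<theta>\<^sup>2 * (2 * t * cmod \<alpha> + (cmod \<alpha>)\<^sup>2)"
      proof -
        have "2 * t * cmod \<alpha> \<le> 2 * t * cmod \<alpha> + (cmod \<alpha>)\<^sup>2" by simp
        also have "\<dots> \<le> 4 / \<theta>\<^sup>2 * (2 * t * cmod \<alpha> + (cmod \<alpha>)\<^sup>2)"
        proof -
          have X0: "0 \<le> 2 * t * cmod \<alpha> + (cmod \<alpha>)\<^sup>2" using t0 a0 by simp
          show ?thesis using mult_right_mono[OF q X0] by simp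
        qed
        finally show ?thesis .
      qed
      thus ?thesis by (simp add: algebra_simps)
    qed
    also have "\<dots> = 4 / \<theta>\<^sup>2 * (cmod (hinner p av))\<^sup>2" by (simp add: hpn power2_sum algebra_simps)
    finally show ?thesis using np by simp
  qed
  moreover have "dP x p < \<theta>"
  proof -
    have p0: "p \<noteq> 0\<^sub>v d"
    proof
      assume "p = 0\<^sub>v d"
      hence "hinner p av = 0" using ac by (simp add: hinner_sum)
      thus False using hp0 by simp
    qed
    have "x - p = (- (of_real t * c)) \<cdot>\<^sub>v av" unfolding p_def using xc ac by (intro eq_vecI) auto
    hence "nrm2 (x - p) = t\<^sup>2"
      using ac na cm t0 by (simp add: nrm2_sum[of _ d] sum_distrib_left[symmetric] norm_mult power_mult_distrib del: of_real_mult)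
    hence "dP x p \<le> sqrt (t\<^sup>2 / N)" using dP_sub[OF xc x0 pc p0] N_def by simp
    also have "\<dots> = 2 * \<theta> / 3" using N th by (simp add: tt real_sqrt_divide real_sqrt_mult)
    also have "\<dots> < \<theta>" using th by simp
    finally show ?thesis .
  qed
  moreover have "p \<in> PK K d"
  proof -
    have "Kvec K d p" unfolding p_def using xK av cK K
      by (auto simp: Kvec_def intro!: Kc_add[OF K] Kc_mult[OF K] Kc_real[OF K])
    moreover have "p \<noteq> 0\<^sub>v d"
    proof
      assume "p = 0\<^sub>v d"
      hence "hinner p av = 0" using ac by (simp add: hinner_sum)
      thus False using hp0 by simp
    qed
    ultimately show ?thesis by (simp add: PK_def)
  qed
  ultimately show ?thesis using hp0 by blast
qed

lemma hyp_exists: assumes K: "Kfield K" and d: "2 \<le> d" and u: "u \<in> PK K d"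
  shows "\<exists>q. q \<in> PK K d \<and> q \<in> hyp K d u"
proof -
  have uc: "u \<in> carrier_vec d" and uK: "Kvec K d u" using u by (auto simp: PK_def Kvec_def)
  have split: "\<And>f :: nat \<Rightarrow> complex. (\<forall>i. 2 \<le> i \<longrightarrow> i < d \<longrightarrow> f i = 0) \<Longrightarrow> (\<Sum>i<d. f i) = f 0 + f 1"
  proof -
    fix f :: "nat \<Rightarrow> complex" assume f: "\<forall>i. 2 \<le> i \<longrightarrow> i < d \<longrightarrow> f i = 0"
    have "{..<d} = {0,1} \<union> {2..<d}" using d by auto
    hence "(\<Sum>i<d. f i) = (\<Sum>i\<in>{0,1}. f i) + (\<Sum>i\<in>{2..<d}. f i)" by (simp add: sum.union_disjoint)
    also have "(\<Sum>i\<in>{2..<d}. f i) = 0" using f by auto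
    finally show "(\<Sum>i<d. f i) = f 0 + f 1" by simp
  qed
  show ?thesis
  proof (cases "u $ 0 = 0 \<and> u $ 1 = 0")
    case True
    define q :: "complex vec" where "q = unit_vec d 0"
    have "hinner q u = 0" using True d uc by (simp add: q_def hinner_unit)
    moreover have "Kvec K d q" using K by (auto simp: q_def Kvec_def unit_vec_def Kc_0 Kc_1)
    moreover have "q \<noteq> 0\<^sub>v d"
    proof
      assume "q = 0\<^sub>v d" hence "q $ 0 = 0" using d by simp
      thus False using d by (simp add: q_def)
    qed
    ultimately show ?thesis by (auto simp: PK_def hyp_def)
  next
    case False
    define q where "q = vec d (\<lambda>i. if i = 0 then cnj (u $ 1) else if i = 1 then - cnj (u $ 0) else 0)"
    have "hinner q u = (\<Sum>i<d. q $ i * cnj (u $ i))" using hinner_sum[OF uc] .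
    also have "\<dots> = q $ 0 * cnj (u $ 0) + q $ 1 * cnj (u $ 1)" by (rule split) (simp add: q_def)
    also have "\<dots> = 0" using d by (simp add: q_def)
    finally have "hinner q u = 0" .
    moreover have "Kvec K d q" using K uK d
      by (auto simp: q_def Kvec_def intro!: Kc_cnj Kc_uminus Kc_0)
    moreover have "q \<noteq> 0\<^sub>v d"
    proof
      assume "q = 0\<^sub>v d" hence "q $ 0 = 0" "q $ 1 = 0" using d by auto
      thus False using False d by (simp add: q_def)
    qed
    ultimately show ?thesis by (auto simp: PK_def hyp_def)
  qed
qed

lemma final_arith: assumes s: "0 \<le> s" "s \<le> \<epsilon> * \<theta> / 16" and th: "0 < \<theta>" and e: "0 < \<epsilon>"
  and NQ: "N \<le> 4 / \<theta>\<^sup>2 * Q" and Q: "0 < Q" and N: "0 \<le> N"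
  shows "sqrt (s\<^sup>2 * N / Q) \<le> \<epsilon> / 8"
proof -
  have NQ': "N / Q \<le> 4 / \<theta>\<^sup>2" using NQ Q by (simp add: divide_le_eq)
  have "s\<^sup>2 * N / Q = s\<^sup>2 * (N / Q)" by simp
  also have "\<dots> \<le> s\<^sup>2 * (4 / \<theta>\<^sup>2)" using NQ' by (intro mult_left_mono) auto
  finally have "s\<^sup>2 * N / Q \<le> s\<^sup>2 * (4 / \<theta>\<^sup>2)" .
  also have "\<dots> \<le> (\<epsilon> * \<theta> / 16)\<^sup>2 * (4 / \<theta>\<^sup>2)" using s th by (intro mult_right_mono power_mono) auto
  also have "\<dots> = (\<epsilon> / 8)\<^sup>2" using th by (simp add: power_mult_distrib power_divide)
  finally have "s\<^sup>2 * N / Q \<le> (\<epsilon> / 8)\<^sup>2" .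
  hence "sqrt (s\<^sup>2 * N / Q) \<le> sqrt ((\<epsilon> / 8)\<^sup>2)" by (rule real_sqrt_le_mono)
  thus ?thesis using e by simp
qed



lemma prod2_carrier: "(A :: complex mat) \<in> carrier_mat d d \<Longrightarrow> B \<in> carrier_mat d d \<Longrightarrow> A * B \<in> carrier_mat d d"
  by (rule mult_carrier_mat)

lemma prod3_carrier: "(A :: complex mat) \<in> carrier_mat d d \<Longrightarrow> B \<in> carrier_mat d d \<Longrightarrow> C \<in> carrier_mat d d \<Longrightarrow> A * B * C \<in> carrier_mat d d"
  by (rule mult_carrier_mat[OF mult_carrier_mat])

lemma mv_unit: fixes M :: "complex mat"
  shows "M \<in> carrier_mat n d \<Longrightarrow> i < n \<Longrightarrow> j < d \<Longrightarrow> (M *\<^sub>v unit_vec d j) $ i = M $$ (i,j)"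
proof -
  assume M: "M \<in> carrier_mat n d" and i: "i < n" and j: "j < d"
  have "(M *\<^sub>v unit_vec d j) $ i = (\<Sum>l<d. M $$ (i,l) * unit_vec d j $ l)"
    by (rule mvsum[OF M unit_vec_carrier i])
  also have "\<dots> = (\<Sum>l<d. if l = j then M $$ (i,j) else 0)"
    using j by (intro sum.cong) auto
  finally have "(M *\<^sub>v unit_vec d j) $ i = (\<Sum>l<d. if l = j then M $$ (i,j) else 0)" .
  thus ?thesis using j by simp
qed

lemma mat_eq_vec: fixes M N :: "complex mat" assumes M: "M \<in> carrier_mat d d" and N: "N \<in> carrier_mat d d"
  and eq: "\<And>v. v \<in> carrier_vec d \<Longrightarrow> M *\<^sub>v v = N *\<^sub>v v" shows "M = N"
proof (rule eq_matI)
  fix i j assume "i < dim_row N" "j < dim_col N"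
  hence i: "i < d" and j: "j < d" using N by auto
  have "M $$ (i,j) = (M *\<^sub>v unit_vec d j) $ i" using mv_unit[OF M i j] by simp
  also have "\<dots> = (N *\<^sub>v unit_vec d j) $ i" using eq[of "unit_vec d j"] by simp
  also have "\<dots> = N $$ (i,j)" using mv_unit[OF N i j] .
  finally show "M $$ (i,j) = N $$ (i,j)" .
qed (use M N in auto)

definition Prev :: "nat \<Rightarrow> complex mat" where
  "Prev d = Matrix.mat d d (\<lambda>(i,j). if i + j = d - 1 then 1 else 0)"

lemma Prev_carrier[simp]: "Prev d \<in> carrier_mat d d" by (simp add: Prev_def)

lemma Prev_mv: assumes w: "w \<in> carrier_vec d" shows "Prev d *\<^sub>v w = vec d (\<lambda>i. w $ (d - 1 - i))"
proof (rule eq_vecI)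
  fix i assume "i < dim_vec (vec d (\<lambda>i. w $ (d - 1 - i)))"
  hence i: "i < d" by simp
  have "(Prev d *\<^sub>v w) $ i = (\<Sum>l<d. Prev d $$ (i,l) * w $ l)"
    by (rule mvsum[OF Prev_carrier w i])
  also have "\<dots> = (\<Sum>l<d. if l = d - 1 - i then w $ (d - 1 - i) else 0)"
    using i by (intro sum.cong) (auto simp: Prev_def)
  finally have "(Prev d *\<^sub>v w) $ i = (\<Sum>l<d. if l = d - 1 - i then w $ (d - 1 - i) else 0)" .
  thus "(Prev d *\<^sub>v w) $ i = vec d (\<lambda>i. w $ (d - 1 - i)) $ i" using i by simp
qed (use w in \<open>auto simp: Prev_def\<close>)

lemma Prev_cadj: "cadj (Prev d) = Prev d"
  by (intro eq_matI) (auto simp: cadj_def Prev_def add.commute)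

lemma Prev_Prev: "Prev d * Prev d = 1\<^sub>m d"
proof (rule mat_eq_vec)
  fix v :: "complex vec" assume v: "v \<in> carrier_vec d"
  have "(Prev d * Prev d) *\<^sub>v v = Prev d *\<^sub>v (Prev d *\<^sub>v v)" using v by (simp add: assoc_mult_mat_vec[of _ d d _ d])
  also have "\<dots> = v" using v by (intro eq_vecI) (auto simp: Prev_mv)
  finally show "(Prev d * Prev d) *\<^sub>v v = 1\<^sub>m d *\<^sub>v v" using v by simp
qed (auto intro: prod2_carrier)

lemma Prev_unit: "unit d (Prev d)"
  using Prev_Prev by (simp add: unit_def Prev_cadj)

lemma Prev_K: "Kfield K \<Longrightarrow> Kmat K d (Prev d)"
  by (auto simp: Kmat_def Prev_def Kc_0 Kc_1)

lemma nrm2_zero: "v \<in> carrier_vec d \<Longrightarrow> nrm2 v = 0 \<Longrightarrow> v = 0\<^sub>v d"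
  using nrm2_pos by fastforce

lemma rev_cartan:
  assumes K: "Kfield K" and d: "0 < d" and C: "cartan K d h k \<sigma> k'"
    and g: "g \<in> carrier_mat d d" and gh: "g * h = 1\<^sub>m d" and hg: "h * g = 1\<^sub>m d"
  shows "(\<forall>i<d. 0 < \<sigma> i) \<and> cartan K d g (cadj k' * Prev d) (\<lambda>i. 1 / \<sigma> (d - 1 - i)) (Prev d * cadj k)"
proof -
  have ku: "unit d k" and k'u: "unit d k'" and kK: "Kmat K d k" and k'K: "Kmat K d k'"
    and s0: "\<forall>i<d. 0 \<le> \<sigma> i" and smono: "\<forall>i j. i \<le> j \<longrightarrow> j < d \<longrightarrow> \<sigma> j \<le> \<sigma> i"
    and hdef: "h = k * mat_diag d (\<lambda>i. complex_of_real (\<sigma> i)) * k'"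
    using C by (auto simp: cartan_def unitaryK_def unitaryK_unit)
  have kc: "k \<in> carrier_mat d d" and k'c: "k' \<in> carrier_mat d d" using ku k'u unit_carrier by auto
  have D: "dec d h k \<sigma> k'" using cartan_dec[OF C] .
  have hc: "h \<in> carrier_mat d d" unfolding hdef by (rule prod3_carrier[OF kc mat_diag_dim k'c])
  have last_pos: "0 < \<sigma> (d - 1)"
  proof (rule ccontr)
    assume "\<not> 0 < \<sigma> (d - 1)"
    moreover have "0 \<le> \<sigma> (d - 1)" using s0 d by simp
    ultimately have s: "\<sigma> (d - 1) = 0" by linarith
    define v0 where "v0 = cadj k' *\<^sub>v unit_vec d (d - 1)"
    have v0c: "v0 \<in> carrier_vec d" using k'c by (simp add: v0_def)
    have kv: "k' *\<^sub>v v0 = unit_vec d (d - 1)" unfolding v0_def by (rule unit_inv_right[OF k'u]) simp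
    have "nrm2 (h *\<^sub>v v0) = (\<Sum>i<d. (\<sigma> i)\<^sup>2 * (cmod (unit_vec d (d - 1) $ i))\<^sup>2)"
      using dec_norm[OF D v0c] kv by simp
    also have "\<dots> = (\<Sum>i<d. 0)" using s by (intro sum.cong) (auto simp: unit_vec_def)
    finally have "h *\<^sub>v v0 = 0\<^sub>v d" using nrm2_zero[of "h *\<^sub>v v0" d] hc v0c by simp
    hence z1: "g *\<^sub>v (h *\<^sub>v v0) = 0\<^sub>v d" using mv_zero[OF g] by simp
    have "g *\<^sub>v (h *\<^sub>v v0) = (g * h) *\<^sub>v v0" by (rule assoc_mult_mat_vec[symmetric, OF g hc v0c])
    also have "\<dots> = v0" using gh v0c by simp
    finally have "v0 = 0\<^sub>v d" using z1 by simp
    moreover have "nrm2 v0 = 1" unfolding v0_def using unit_nrm2[OF unit_cadj[OF k'u]] nrm2_unit d by simp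
    moreover have "nrm2 (0\<^sub>v d) = 0" by (simp add: nrm2_sum[of _ d])
    ultimately show False by simp
  qed
  have spos: "\<forall>i<d. 0 < \<sigma> i"
  proof (intro allI impI)
    fix i assume i: "i < d"
    hence "\<sigma> (d - 1) \<le> \<sigma> i" using smono d by auto
    thus "0 < \<sigma> i" using last_pos by linarith
  qed
  define \<rho> where "\<rho> = (\<lambda>i. 1 / \<sigma> (d - 1 - i))"
  define k2 where "k2 = cadj k' * Prev d"
  define k2' where "k2' = Prev d * cadj k"
  have k2u: "unit d k2" unfolding k2_def by (rule unit_mult[OF unit_cadj[OF k'u] Prev_unit])
  have k2'u: "unit d k2'" unfolding k2'_def by (rule unit_mult[OF Prev_unit unit_cadj[OF ku]])
  have k2K: "Kmat K d k2" unfolding k2_def by (rule Kmat_mult[OF K Kmat_cadj[OF K k'K] Prev_K[OF K]])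
  have k2'K: "Kmat K d k2'" unfolding k2'_def by (rule Kmat_mult[OF K Prev_K[OF K] Kmat_cadj[OF K kK]])
  have k2c: "k2 \<in> carrier_mat d d" and k2'c: "k2' \<in> carrier_mat d d" using k2u k2'u unit_carrier by auto
  define X where "X = k2 * mat_diag d (\<lambda>i. complex_of_real (\<rho> i)) * k2'"
  have Xc: "X \<in> carrier_mat d d" unfolding X_def by (rule prod3_carrier[OF k2c mat_diag_dim k2'c])
  have Xv: "\<And>v. v \<in> carrier_vec d \<Longrightarrow> X *\<^sub>v v = cadj k' *\<^sub>v vec d (\<lambda>i. (cadj k *\<^sub>v v) $ i / complex_of_real (\<sigma> i))"
  proof -
    fix v :: "complex vec" assume v: "v \<in> carrier_vec d"
    have "X *\<^sub>v v = k2 *\<^sub>v vec d (\<lambda>i. complex_of_real (\<rho> i) * (k2' *\<^sub>v v) $ i)"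
      unfolding X_def by (rule decomp_apply[OF k2c k2'c v])
    also have "k2' *\<^sub>v v = Prev d *\<^sub>v (cadj k *\<^sub>v v)" unfolding k2'_def using kc v
      by (simp add: assoc_mult_mat_vec[of _ d d _ d])
    also have "k2 *\<^sub>v vec d (\<lambda>i. complex_of_real (\<rho> i) * (Prev d *\<^sub>v (cadj k *\<^sub>v v)) $ i)
        = cadj k' *\<^sub>v (Prev d *\<^sub>v vec d (\<lambda>i. complex_of_real (\<rho> i) * (Prev d *\<^sub>v (cadj k *\<^sub>v v)) $ i))"
      unfolding k2_def using k'c by (simp add: assoc_mult_mat_vec[of _ d d _ d])
    also have "Prev d *\<^sub>v vec d (\<lambda>i. complex_of_real (\<rho> i) * (Prev d *\<^sub>v (cadj k *\<^sub>v v)) $ i)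
        = vec d (\<lambda>i. (cadj k *\<^sub>v v) $ i / complex_of_real (\<sigma> i))"
      using kc v by (intro eq_vecI) (auto simp: Prev_mv \<rho>_def)
    finally show "X *\<^sub>v v = cadj k' *\<^sub>v vec d (\<lambda>i. (cadj k *\<^sub>v v) $ i / complex_of_real (\<sigma> i))" .
  qed
  have "h * X = 1\<^sub>m d"
  proof (rule mat_eq_vec)
    fix v :: "complex vec" assume v: "v \<in> carrier_vec d"
    define w where "w = vec d (\<lambda>i. (cadj k *\<^sub>v v) $ i / complex_of_real (\<sigma> i))"
    have wc: "w \<in> carrier_vec d" by (simp add: w_def)
    have "(h * X) *\<^sub>v v = h *\<^sub>v (X *\<^sub>v v)" using hc Xc v by (simp add: assoc_mult_mat_vec[of _ d d _ d])
    also have "\<dots> = h *\<^sub>v (cadj k' *\<^sub>v w)" using Xv[OF v] w_def by simp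
    also have "\<dots> = k *\<^sub>v vec d (\<lambda>i. complex_of_real (\<sigma> i) * (k' *\<^sub>v (cadj k' *\<^sub>v w)) $ i)"
      unfolding hdef by (rule decomp_apply[OF kc k'c]) (use k'c wc in simp)
    also have "k' *\<^sub>v (cadj k' *\<^sub>v w) = w" by (rule unit_inv_right[OF k'u wc])
    also have "vec d (\<lambda>i. complex_of_real (\<sigma> i) * w $ i) = cadj k *\<^sub>v v"
      using spos kc v by (intro eq_vecI) (auto simp: w_def)
    also have "k *\<^sub>v (cadj k *\<^sub>v v) = v" by (rule unit_inv_right[OF ku v])
    finally show "(h * X) *\<^sub>v v = 1\<^sub>m d *\<^sub>v v" using v by simp
  qed (use hc Xc prod2_carrier in auto)
  hence "X = g" using inv_unique[OF hc Xc g _ gh] by simp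
  hence geq: "g = k2 * mat_diag d (\<lambda>i. complex_of_real (\<rho> i)) * k2'" using X_def by simp
  have r0: "\<forall>i<d. 0 \<le> \<rho> i" using spos by (auto simp: \<rho>_def less_imp_le)
  have rmono: "\<forall>i j. i \<le> j \<longrightarrow> j < d \<longrightarrow> \<rho> j \<le> \<rho> i"
  proof (intro allI impI)
    fix i j assume ij: "i \<le> j" and j: "j < d"
    have "\<sigma> (d - 1 - i) \<le> \<sigma> (d - 1 - j)" using smono ij j by auto
    moreover have "0 < \<sigma> (d - 1 - i)" "0 < \<sigma> (d - 1 - j)" using spos j ij by auto
    ultimately show "\<rho> j \<le> \<rho> i" by (simp add: \<rho>_def frac_le)
  qed
  have "cartan K d g k2 \<rho> k2'"
    unfolding cartan_def unitaryK_def using k2u k2'u k2K k2'K r0 rmono geq by (auto simp: unit_def)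
  thus ?thesis using spos by (simp add: k2_def k2'_def \<rho>_def)
qed



lemma sv_cartan: assumes "cartan K d g k \<sigma> k'" shows "\<exists>k2 k2'. cartan K d g k2 (sv K d g) k2'"
proof -
  have "\<exists>\<sigma> k k'. cartan K d g k \<sigma> k'" using assms by blast
  thus ?thesis unfolding sv_def by (rule someI_ex)
qed

lemma ratio_bound: fixes t0 t1 \<epsilon> \<theta> X :: real assumes r: "\<not> (t0 / t1 < max (16 / (\<epsilon> * \<theta>)) X)" and t1: "0 \<le> t1"
  and e: "0 < \<epsilon>" and th: "0 < \<theta>"
  shows "0 < t1 \<and> 0 < t0 \<and> t1 / t0 \<le> \<epsilon> * \<theta> / 16"
proof -
  have M: "16 / (\<epsilon> * \<theta>) \<le> t0 / t1" using r by simp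
  have Mp: "0 < 16 / (\<epsilon> * \<theta>)" using e th by simp
  have "t1 \<noteq> 0" using M Mp by auto
  hence t1p: "0 < t1" using t1 by simp
  have "16 / (\<epsilon> * \<theta>) * t1 \<le> t0" using M t1p by (simp add: le_divide_eq)
  hence h: "16 * t1 \<le> t0 * (\<epsilon> * \<theta>)" using e th by (simp add: field_simps)
  have "0 < t0 * (\<epsilon> * \<theta>)" using h t1p by linarith
  moreover have "0 < \<epsilon> * \<theta>" using e th by simp
  ultimately have t0p: "0 < t0" by (simp add: zero_less_mult_iff)
  have "t1 / t0 \<le> \<epsilon> * \<theta> / 16" using h t0p by (simp add: field_simps)
  thus ?thesis using t1p t0p by simp
qed

lemma distP_le: assumes "v \<in> U" and "U \<subseteq> carrier_vec d" and "w \<in> carrier_vec d"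
  shows "distP w U \<le> dP w v"
  unfolding distP_def
proof (rule cInf_lower)
  show "dP w v \<in> dP w ` U" using assms by simp
  show "bdd_below (dP w ` U)" using assms dP_nonneg by (intro bdd_belowI[of _ 0]) blast
qed

lemma av_props: assumes K: "Kfield K" and k': "unitaryK K d k'" and j: "j < d"
  shows "Kvec K d (cadj k' *\<^sub>v unit_vec d j) \<and> nrm2 (cadj k' *\<^sub>v unit_vec d j) = 1 \<and>
    (\<forall>p \<in> carrier_vec d. (k' *\<^sub>v p) $ j = hinner p (cadj k' *\<^sub>v unit_vec d j))"
proof (intro conjI ballI)
  have kK: "Kmat K d k'" and ku: "unit d k'" using k' by (auto simp: unitaryK_def unitaryK_unit)
  have kc: "k' \<in> carrier_mat d d" using kK by (simp add: Kmat_def)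
  have eK: "Kvec K d (unit_vec d j)" using K by (auto simp: Kvec_def unit_vec_def Kc_0 Kc_1)
  show "Kvec K d (cadj k' *\<^sub>v unit_vec d j)" by (rule Kmat_mv[OF K Kmat_cadj[OF K kK] eK])
  show "nrm2 (cadj k' *\<^sub>v unit_vec d j) = 1" using unit_nrm2[OF unit_cadj[OF ku]] nrm2_unit[OF j] by simp
  fix p :: "complex vec" assume p: "p \<in> carrier_vec d"
  have "(k' *\<^sub>v p) $ j = hinner (k' *\<^sub>v p) (unit_vec d j)" using hinner_unit_right[OF j, of "k' *\<^sub>v p"] kc p by simp
  also have "\<dots> = hinner p (cadj k' *\<^sub>v unit_vec d j)" by (rule hinner_adj[OF kc p unit_vec_carrier])
  finally show "(k' *\<^sub>v p) $ j = hinner p (cadj k' *\<^sub>v unit_vec d j)" .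
qed

lemma partI:
  assumes K: "Kfield K" and d: "d \<ge> 2"
    and GL: "\<forall>i\<in>{1,2}. \<Gamma> i \<subseteq> GLK K d" and pp: "pingpong K d \<Gamma> U V"
    and pU: "\<forall>i\<in>{1,2}. projset K d (U i)"
    and eps: "\<epsilon> > 0" and th: "0 < \<theta>" "\<theta> \<le> 1"
    and xy: "\<forall>i\<in>{1,2}. x i \<in> U i \<and> ballP K d (x i) \<theta> \<subseteq> U i"
    and red: "reduced d \<Gamma> gs" and gdef: "g = foldr (*) gs (1\<^sub>m d)"
    and rat: "\<not> (sv K d g 0 / sv K d g 1 < max (16 / (\<epsilon> * \<theta>)) X)"
    and a: "a \<in> {1,2}" "gs ! 0 \<in> \<Gamma> a" "\<forall>j\<in>{1,2}. gs ! 0 \<in> \<Gamma> j \<longrightarrow> j = a"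
    and C: "cartan K d g k \<sigma> k'"
  shows "distP (k *\<^sub>v unit_vec d 0) (U a) \<le> \<epsilon> / 8"
proof -
  have d1: "1 < d" using d by simp
  have sub: "\<forall>i\<in>{1,2}. \<Gamma> i \<subseteq> carrier_mat d d" using GL by (auto simp: GLK_def Kmat_def)
  obtain k2 k2' where C2: "cartan K d g k2 (sv K d g) k2'" using sv_cartan[OF C] by blast
  have eq: "\<sigma> 0 = sv K d g 0 \<and> \<sigma> 1 = sv K d g 1" by (rule dec_eq[OF cartan_dec[OF C] cartan_dec[OF C2] d1])
  have "0 \<le> sv K d g 1" using C2 d1 by (auto simp: cartan_def)
  from ratio_bound[OF rat this eps th(1)]
  have s1: "0 < \<sigma> 1" "0 < \<sigma> 0" "\<sigma> 1 / \<sigma> 0 \<le> \<epsilon> * \<theta> / 16" using eq by auto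
  have ku: "unit d k" and k'u: "unit d k'" and k'U: "unitaryK K d k'"
    and s0: "\<forall>i<d. 0 \<le> \<sigma> i" and smono: "\<forall>i j. i \<le> j \<longrightarrow> j < d \<longrightarrow> \<sigma> j \<le> \<sigma> i"
    and gk: "g = k * mat_diag d (\<lambda>i. complex_of_real (\<sigma> i)) * k'"
    using C by (auto simp: cartan_def unitaryK_unit)
  have kc: "k \<in> carrier_mat d d" and k'c: "k' \<in> carrier_mat d d" using ku k'u unit_carrier by auto
  have gsne: "gs \<noteq> []" using red by (simp add: reduced_def)
  have hd0: "hd gs = gs ! 0" using gsne by (simp add: hd_conv_nth)
  have "last gs \<in> \<Gamma> 1 \<union> \<Gamma> 2" using reduced_mem[OF red] gsne by simp
  then obtain b' where b': "b' \<in> {1,2}" "last gs \<in> \<Gamma> b'" by auto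
  define b where "b = (if b' = 1 then 2 else (1::nat))"
  have b: "b \<in> {1,2}" "b \<noteq> b'" using b' by (auto simp: b_def)
  define av where "av = cadj k' *\<^sub>v unit_vec d 0"
  have avp: "Kvec K d av" "nrm2 av = 1" "\<forall>p \<in> carrier_vec d. (k' *\<^sub>v p) $ 0 = hinner p av"
    using av_props[OF K k'U, of 0] d unfolding av_def by auto
  have xb: "x b \<in> PK K d" using xy pU b(1) by (auto simp: projset_def)
  obtain p where p: "p \<in> PK K d" "dP (x b) p < \<theta>" "hinner p av \<noteq> 0"
      "nrm2 p \<le> 4 / \<theta>\<^sup>2 * (cmod (hinner p av))\<^sup>2"
    using ball_trick[OF K xb avp(1,2) th] by blast
  have pc: "p \<in> carrier_vec d" using p(1) by (simp add: PK_def Kvec_def)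
  have "p \<in> U b" using xy b(1) p(1,2) by (auto simp: ballP_def)
  hence pcl: "p \<in> closP K d (U b)" using sub_clos pU b(1) by blast
  have gp: "g *\<^sub>v p \<in> U a"
    unfolding gdef by (rule chainP[OF sub pp pU red a(1) _ _ b(1) b'(1) b(2) b'(2) pcl]) (use a hd0 in auto)
  have Uc: "U a \<subseteq> carrier_vec d" using pU a(1) by (auto simp: projset_def PK_def Kvec_def)
  have "distP (k *\<^sub>v unit_vec d 0) (U a) \<le> dP (k *\<^sub>v unit_vec d 0) (g *\<^sub>v p)"
    by (rule distP_le[OF gp Uc]) (use kc in simp)
  also have "g *\<^sub>v p = k *\<^sub>v vec d (\<lambda>i. complex_of_real (\<sigma> i) * (k' *\<^sub>v p) $ i)"
    unfolding gk by (rule decomp_apply[OF kc k'c pc])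
  also have "dP (k *\<^sub>v unit_vec d 0) (k *\<^sub>v vec d (\<lambda>i. complex_of_real (\<sigma> i) * (k' *\<^sub>v p) $ i))
      = dP (unit_vec d 0) (vec d (\<lambda>i. complex_of_real (\<sigma> i) * (k' *\<^sub>v p) $ i))"
    by (rule unit_dP[OF ku]) auto
  also have "\<dots> \<le> sqrt ((\<sigma> 1)\<^sup>2 * nrm2 p / ((\<sigma> 0)\<^sup>2 * (cmod (hinner p av))\<^sup>2))"
  proof (rule dP_unit)
    define q where "q = k' *\<^sub>v p"
    have qc: "q \<in> carrier_vec d" using k'c pc by (simp add: q_def)
    have q0: "q $ 0 = hinner p av" using avp(3) pc by (simp add: q_def)
    show "0 < d" using d by simp
    show "vec d (\<lambda>i. complex_of_real (\<sigma> i) * (k' *\<^sub>v p) $ i) \<in> carrier_vec d" by simp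
    show "0 < (\<sigma> 0)\<^sup>2 * (cmod (hinner p av))\<^sup>2" using s1 p(3) by simp
    show "(\<sigma> 0)\<^sup>2 * (cmod (hinner p av))\<^sup>2 \<le> (cmod (vec d (\<lambda>i. complex_of_real (\<sigma> i) * (k' *\<^sub>v p) $ i) $ 0))\<^sup>2"
      using d q0 s1 by (simp add: q_def[symmetric] norm_mult power_mult_distrib)
    have "(\<Sum>i\<in>{..<d} - {0}. (cmod (vec d (\<lambda>i. complex_of_real (\<sigma> i) * (k' *\<^sub>v p) $ i) $ i))\<^sup>2)
        = (\<Sum>i\<in>{..<d} - {0}. (\<sigma> i)\<^sup>2 * (cmod (q $ i))\<^sup>2)"
      by (intro sum.cong) (auto simp: q_def norm_mult power_mult_distrib)
    also have "\<dots> \<le> (\<Sum>i\<in>{..<d} - {0}. (\<sigma> 1)\<^sup>2 * (cmod (q $ i))\<^sup>2)"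
    proof (rule sum_mono)
      fix i assume i: "i \<in> {..<d} - {0}"
      hence "0 \<le> \<sigma> i" "\<sigma> i \<le> \<sigma> 1" using s0 smono by auto
      hence "(\<sigma> i)\<^sup>2 \<le> (\<sigma> 1)\<^sup>2" by (intro power_mono) auto
      thus "(\<sigma> i)\<^sup>2 * (cmod (q $ i))\<^sup>2 \<le> (\<sigma> 1)\<^sup>2 * (cmod (q $ i))\<^sup>2" by (intro mult_right_mono) auto
    qed
    also have "\<dots> \<le> (\<Sum>i<d. (\<sigma> 1)\<^sup>2 * (cmod (q $ i))\<^sup>2)"
      by (rule sum_mono2) auto
    also have "\<dots> = (\<sigma> 1)\<^sup>2 * nrm2 q" using qc by (simp add: nrm2_sum[of _ d] sum_distrib_left)
    also have "nrm2 q = nrm2 p" unfolding q_def by (rule unit_nrm2[OF k'u pc])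
    finally show "(\<Sum>i\<in>{..<d} - {0}. (cmod (vec d (\<lambda>i. complex_of_real (\<sigma> i) * (k' *\<^sub>v p) $ i) $ i))\<^sup>2)
        \<le> (\<sigma> 1)\<^sup>2 * nrm2 p" .
  qed
  also have "(\<sigma> 1)\<^sup>2 * nrm2 p / ((\<sigma> 0)\<^sup>2 * (cmod (hinner p av))\<^sup>2)
      = (\<sigma> 1 / \<sigma> 0)\<^sup>2 * nrm2 p / (cmod (hinner p av))\<^sup>2"
    by (simp add: power_divide)
  also have "sqrt \<dots> \<le> \<epsilon> / 8"
    by (rule final_arith[OF _ s1(3) th(1) eps p(4)]) (use s1 p(3) nrm2_nonneg pc in auto)
  finally show ?thesis .
qed

lemma w_parallel: assumes K: "Kfield K" and d: "0 < d" and ku: "unit d k" and kK: "Kmat K d k"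
  and w: "w \<in> PK K d" and hw: "hyp K d w = spanFirst K d k"
  shows "\<exists>c. c \<noteq> 0 \<and> w = c \<cdot>\<^sub>v (k *\<^sub>v unit_vec d (d - 1))"
proof -
  have kc: "k \<in> carrier_mat d d" using unit_carrier[OF ku] .
  have wc: "w \<in> carrier_vec d" and w0: "w \<noteq> 0\<^sub>v d" using w by (auto simp: PK_def Kvec_def)
  define r where "r = cadj k *\<^sub>v w"
  have rc: "r \<in> carrier_vec d" using kc wc by (simp add: r_def)
  have rj: "\<And>j. j < d - 1 \<Longrightarrow> r $ j = 0"
  proof -
    fix j assume j: "j < d - 1"
    hence jd: "j < d" by simp
    have "k *\<^sub>v unit_vec d j \<in> spanFirst K d k"
    proof -
      have "k *\<^sub>v unit_vec d j = vec d (\<lambda>r. \<Sum>l<d-1. (if l = j then 1 else 0) * k $$ (r,l))"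
      proof (rule eq_vecI)
        fix i assume "i < dim_vec (vec d (\<lambda>r. \<Sum>l<d-1. (if l = j then 1 else 0) * k $$ (r,l)))"
        hence i: "i < d" by simp
        have "(\<Sum>l<d-1. (if l = j then 1 else 0) * k $$ (i,l)) = (\<Sum>l<d-1. if l = j then k $$ (i,j) else 0)"
          by (intro sum.cong) auto
        also have "\<dots> = k $$ (i,j)" using j by simp
        finally show "(k *\<^sub>v unit_vec d j) $ i = vec d (\<lambda>r. \<Sum>l<d-1. (if l = j then 1 else 0) * k $$ (r,l)) $ i"
          using mv_unit[OF kc i jd] i by simp
      qed (use kc in simp)
      moreover have "\<forall>l<d-1. (if l = j then 1 else 0) \<in> K" using K by (auto simp: Kc_0 Kc_1)
      ultimately show ?thesis unfolding spanFirst_def mem_Collect_eq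
        by (intro exI[of _ "\<lambda>l. if l = j then (1::complex) else 0"] conjI) auto
    qed
    hence "hinner (k *\<^sub>v unit_vec d j) w = 0" using hw by (auto simp: hyp_def)
    hence "hinner w (k *\<^sub>v unit_vec d j) = 0" using hinner_cnj[of "k *\<^sub>v unit_vec d j" d w] kc wc by simp
    moreover have "hinner w (k *\<^sub>v unit_vec d j) = hinner (cadj k *\<^sub>v w) (unit_vec d j)"
      using hinner_adj[OF cadj_carrier[OF kc] wc unit_vec_carrier, of j] cadj_cadj[OF kc] by simp
    moreover have "hinner (cadj k *\<^sub>v w) (unit_vec d j) = r $ j"
      using hinner_unit_right[OF jd rc] r_def by simp
    ultimately show "r $ j = 0" by simp
  qed
  have req: "r = (r $ (d - 1)) \<cdot>\<^sub>v unit_vec d (d - 1)"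
  proof (rule eq_vecI)
    fix i assume "i < dim_vec ((r $ (d - 1)) \<cdot>\<^sub>v unit_vec d (d - 1))"
    hence i: "i < d" by simp
    show "r $ i = ((r $ (d - 1)) \<cdot>\<^sub>v unit_vec d (d - 1)) $ i"
    proof (cases "i = d - 1")
      case False hence "i < d - 1" using i by simp
      thus ?thesis using rj[of i] i False by simp
    qed (use i in simp)
  qed (use rc in simp)
  have "w = k *\<^sub>v r" unfolding r_def by (rule unit_inv_right[OF ku wc, symmetric])
  also have "\<dots> = (r $ (d - 1)) \<cdot>\<^sub>v (k *\<^sub>v unit_vec d (d - 1))"
    by (subst req) (rule mult_mat_vec[OF kc unit_vec_carrier])
  finally have weq: "w = (r $ (d - 1)) \<cdot>\<^sub>v (k *\<^sub>v unit_vec d (d - 1))" .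
  have "r $ (d - 1) \<noteq> 0"
  proof
    assume "r $ (d - 1) = 0"
    hence "w = 0\<^sub>v d" using weq kc by (intro eq_vecI) auto
    thus False using w0 by simp
  qed
  thus ?thesis using weq by blast
qed

lemma partII:
  assumes K: "Kfield K" and d: "d \<ge> 2"
    and GL: "\<forall>i\<in>{1,2}. \<Gamma> i \<subseteq> GLK K d" and pp: "pingpong K d \<Gamma> U V"
    and pV: "\<forall>i\<in>{1,2}. projset K d (V i)"
    and eps: "\<epsilon> > 0" and th: "0 < \<theta>" "\<theta> \<le> 1"
    and xy: "\<forall>i\<in>{1,2}. y i \<in> V i \<and> ballP K d (y i) \<theta> \<subseteq> V i"
    and red: "reduced d \<Gamma> gs" and gdef: "g = foldr (*) gs (1\<^sub>m d)"
    and rat: "\<not> (sv K d g 0 / sv K d g 1 < max (16 / (\<epsilon> * \<theta>)) X)"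
    and a: "a \<in> {1,2}" "last gs \<in> \<Gamma> a" "\<forall>j\<in>{1,2}. last gs \<in> \<Gamma> j \<longrightarrow> j = a"
    and C: "cartan K d (minv d g) k \<sigma> k'"
    and w: "w \<in> PK K d" and hw: "hyp K d w = spanFirst K d k"
  shows "distP w (V a) \<le> \<epsilon> / 8"
proof -
  have d1: "1 < d" and d0: "0 < d" using d by auto
  have gsne: "gs \<noteq> []" using red by (simp add: reduced_def)
  have setgs: "set gs \<subseteq> GLK K d"
  proof
    fix z assume "z \<in> set gs"
    hence "z \<in> \<Gamma> 1 \<union> \<Gamma> 2" using reduced_mem[OF red] by simp
    thus "z \<in> GLK K d" using GL by blast
  qed
  have gprops: "g \<in> carrier_mat d d" "invertible_mat g" "Kmat K d g"
    using foldr_GL[OF K setgs] gdef by auto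
  define h where "h = minv d g"
  have hsp: "h \<in> carrier_mat d d" "g * h = 1\<^sub>m d" "h * g = 1\<^sub>m d"
    using minv_spec[OF gprops(1,2)] h_def by auto
  have Ch: "cartan K d h k \<sigma> k'" using C h_def by simp
  have RC: "(\<forall>i<d. 0 < \<sigma> i) \<and> cartan K d g (cadj k' * Prev d) (\<lambda>i. 1 / \<sigma> (d - 1 - i)) (Prev d * cadj k)"
    by (rule rev_cartan[OF K d0 Ch gprops(1) hsp(2,3)])
  have spos: "\<forall>i<d. 0 < \<sigma> i" using RC by simp
  have C3: "cartan K d g (cadj k' * Prev d) (\<lambda>i. 1 / \<sigma> (d - 1 - i)) (Prev d * cadj k)" using RC by simp
  obtain k2 k2' where C2: "cartan K d g k2 (sv K d g) k2'" using sv_cartan[OF C3] by blast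
  have eq: "1 / \<sigma> (d - 1 - 0) = sv K d g 0 \<and> 1 / \<sigma> (d - 1 - 1) = sv K d g 1"
    using dec_eq[OF cartan_dec[OF C3] cartan_dec[OF C2] d1] by simp
  have sdm1: "0 < \<sigma> (d - 1)" and sdm2: "0 < \<sigma> (d - 2)" using spos d by auto
  have "0 \<le> sv K d g 1" using C2 d1 by (auto simp: cartan_def)
  from ratio_bound[OF rat this eps th(1)]
  have r1: "sv K d g 1 / sv K d g 0 \<le> \<epsilon> * \<theta> / 16" by simp
  have r2: "sv K d g 1 / sv K d g 0 = \<sigma> (d - 1) / \<sigma> (d - 2)"
  proof -
    have dd: "d - 1 - 1 = d - 2" by simp
    have e0: "sv K d g 0 = 1 / \<sigma> (d - 1)" using eq by simp
    have e1: "sv K d g 1 = 1 / \<sigma> (d - 2)" using eq unfolding dd by simp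
    show ?thesis unfolding e0 e1 using sdm1 sdm2 by simp
  qed
  have s1: "\<sigma> (d - 1) / \<sigma> (d - 2) \<le> \<epsilon> * \<theta> / 16" using r1 unfolding r2 .
  have ku: "unit d k" and k'u: "unit d k'" and k'U: "unitaryK K d k'" and kK: "Kmat K d k"
    and s0: "\<forall>i<d. 0 \<le> \<sigma> i" and smono: "\<forall>i j. i \<le> j \<longrightarrow> j < d \<longrightarrow> \<sigma> j \<le> \<sigma> i"
    and hk: "h = k * mat_diag d (\<lambda>i. complex_of_real (\<sigma> i)) * k'"
    using Ch by (auto simp: cartan_def unitaryK_unit unitaryK_def)
  have kc: "k \<in> carrier_mat d d" and k'c: "k' \<in> carrier_mat d d" using ku k'u unit_carrier by auto
  have "hd gs \<in> \<Gamma> 1 \<union> \<Gamma> 2" using reduced_hd[OF red] by simp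
  then obtain a' where a': "a' \<in> {1,2}" "hd gs \<in> \<Gamma> a'" by auto
  define b where "b = (if a' = 1 then 2 else (1::nat))"
  have b: "b \<in> {1,2}" "b \<noteq> a'" using a' by (auto simp: b_def)
  define av where "av = cadj k' *\<^sub>v unit_vec d (d - 1)"
  have avp: "Kvec K d av" "nrm2 av = 1" "\<forall>p \<in> carrier_vec d. (k' *\<^sub>v p) $ (d - 1) = hinner p av"
    using av_props[OF K k'U, of "d - 1"] d unfolding av_def by auto
  have yb: "y b \<in> PK K d" using xy pV b(1) by (auto simp: projset_def)
  obtain u where u: "u \<in> PK K d" "dP (y b) u < \<theta>" "hinner u av \<noteq> 0"
      "nrm2 u \<le> 4 / \<theta>\<^sup>2 * (cmod (hinner u av))\<^sup>2"
    using ball_trick[OF K yb avp(1,2) th] by blast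
  have uc: "u \<in> carrier_vec d" using u(1) by (simp add: PK_def Kvec_def)
  have "u \<in> V b" using xy b(1) u(1,2) by (auto simp: ballP_def)
  hence ucl: "u \<in> closP K d (V b)" using sub_clos pV b(1) by blast
  define vv where "vv = cadj g *\<^sub>v u"
  have vvV: "vv \<in> V a"
    unfolding vv_def gdef by (rule chainH[OF K GL pp pV red a'(1) a'(2) b(1) b(2) a ucl])
  have vvc: "vv \<in> carrier_vec d" using gprops(1) uc by (simp add: vv_def)
  obtain cw where lam: "cw \<noteq> 0" "w = cw \<cdot>\<^sub>v (k *\<^sub>v unit_vec d (d - 1))"
    using w_parallel[OF K d0 ku kK w hw] by blast
  have Vc: "V a \<subseteq> carrier_vec d" using pV a(1) by (auto simp: projset_def PK_def Kvec_def)
  have wc: "w \<in> carrier_vec d" using w by (simp add: PK_def Kvec_def)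
  define r where "r = cadj k *\<^sub>v vv"
  have rc: "r \<in> carrier_vec d" using kc vvc by (simp add: r_def)
  have vvr: "vv = k *\<^sub>v r" unfolding r_def by (rule unit_inv_right[OF ku vvc, symmetric])
  define q where "q = k' *\<^sub>v u"
  have qc: "q \<in> carrier_vec d" using k'c uc by (simp add: q_def)
  have cadjh: "cadj h = cadj k' * mat_diag d (\<lambda>i. complex_of_real (\<sigma> i)) * cadj k"
  proof -
    have "cadj h = cadj k' * cadj (k * mat_diag d (\<lambda>i. complex_of_real (\<sigma> i)))"
      unfolding hk by (rule cadj_mult[OF prod2_carrier[OF kc mat_diag_dim] k'c])
    also have "cadj (k * mat_diag d (\<lambda>i. complex_of_real (\<sigma> i))) = mat_diag d (\<lambda>i. complex_of_real (\<sigma> i)) * cadj k"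
      using cadj_mult[OF kc mat_diag_dim] cadj_diag_real by simp
    also have "cadj k' * (mat_diag d (\<lambda>i. complex_of_real (\<sigma> i)) * cadj k) = cadj k' * mat_diag d (\<lambda>i. complex_of_real (\<sigma> i)) * cadj k"
      by (rule assoc_mult_mat[symmetric, OF cadj_carrier[OF k'c] mat_diag_dim cadj_carrier[OF kc]])
    finally show ?thesis .
  qed
  have "cadj h * cadj g = 1\<^sub>m d" using cadj_mult[OF gprops(1) hsp(1)] hsp(2) by simp
  hence "u = (cadj h * cadj g) *\<^sub>v u" using uc by simp
  also have "\<dots> = cadj h *\<^sub>v vv" unfolding vv_def
    by (rule assoc_mult_mat_vec[OF cadj_carrier[OF hsp(1)] cadj_carrier[OF gprops(1)] uc])
  also have "\<dots> = cadj k' *\<^sub>v vec d (\<lambda>i. complex_of_real (\<sigma> i) * r $ i)"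
    unfolding cadjh r_def by (rule decomp_apply[OF cadj_carrier[OF k'c] cadj_carrier[OF kc] vvc])
  finally have "q = k' *\<^sub>v (cadj k' *\<^sub>v vec d (\<lambda>i. complex_of_real (\<sigma> i) * r $ i))" unfolding q_def by simp
  also have "\<dots> = vec d (\<lambda>i. complex_of_real (\<sigma> i) * r $ i)" by (rule unit_inv_right[OF k'u]) simp
  finally have qr: "\<And>i. i < d \<Longrightarrow> q $ i = complex_of_real (\<sigma> i) * r $ i" by simp
  have rq: "\<And>i. i < d \<Longrightarrow> r $ i = q $ i / complex_of_real (\<sigma> i)"
  proof -
    fix i assume i: "i < d"
    hence "0 < \<sigma> i" using spos by simp
    hence "complex_of_real (\<sigma> i) \<noteq> 0" by simp
    thus "r $ i = q $ i / complex_of_real (\<sigma> i)" using qr[OF i] by simp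
  qed
  have qd: "q $ (d - 1) = hinner u av" using avp(3) uc by (simp add: q_def)
  have "distP w (V a) \<le> dP w vv" by (rule distP_le[OF vvV Vc wc])
  also have "\<dots> = dP (k *\<^sub>v unit_vec d (d - 1)) vv" unfolding lam(2)
    by (rule dP_smult_left[OF _ vvc lam(1)]) (use kc in simp)
  also have "\<dots> = dP (unit_vec d (d - 1)) r" unfolding vvr by (rule unit_dP[OF ku unit_vec_carrier rc])
  also have "\<dots> \<le> sqrt ((nrm2 u / (\<sigma> (d - 2))\<^sup>2) / ((cmod (hinner u av))\<^sup>2 / (\<sigma> (d - 1))\<^sup>2))"
  proof (rule dP_unit[OF _ rc])
    show "d - 1 < d" using d by simp
    show "0 < (cmod (hinner u av))\<^sup>2 / (\<sigma> (d - 1))\<^sup>2" using u(3) sdm1 by simp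
    show "(cmod (hinner u av))\<^sup>2 / (\<sigma> (d - 1))\<^sup>2 \<le> (cmod (r $ (d - 1)))\<^sup>2"
      using rq[of "d - 1"] d0 qd sdm1 by (simp add: norm_divide power_divide)
    have "(\<Sum>i\<in>{..<d} - {d - 1}. (cmod (r $ i))\<^sup>2) \<le> (\<Sum>i\<in>{..<d} - {d - 1}. (cmod (q $ i))\<^sup>2 / (\<sigma> (d - 2))\<^sup>2)"
    proof (rule sum_mono)
      fix i assume i: "i \<in> {..<d} - {d - 1}"
      hence il: "i < d" "i \<le> d - 2" by auto
      have si: "0 < \<sigma> i" using spos il by simp
      have "\<sigma> (d - 2) \<le> \<sigma> i" using smono il d by auto
      hence "(\<sigma> (d - 2))\<^sup>2 \<le> (\<sigma> i)\<^sup>2" using sdm2 by (intro power_mono) auto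
      hence "(cmod (q $ i))\<^sup>2 / (\<sigma> i)\<^sup>2 \<le> (cmod (q $ i))\<^sup>2 / (\<sigma> (d - 2))\<^sup>2"
        using sdm2 si by (intro divide_left_mono) auto
      thus "(cmod (r $ i))\<^sup>2 \<le> (cmod (q $ i))\<^sup>2 / (\<sigma> (d - 2))\<^sup>2"
        using rq[OF il(1)] si by (simp add: norm_divide power_divide)
    qed
    also have "\<dots> \<le> (\<Sum>i<d. (cmod (q $ i))\<^sup>2 / (\<sigma> (d - 2))\<^sup>2)" by (rule sum_mono2) auto
    also have "\<dots> = nrm2 q / (\<sigma> (d - 2))\<^sup>2" using qc by (simp add: nrm2_sum[of _ d] sum_divide_distrib)
    also have "nrm2 q = nrm2 u" unfolding q_def by (rule unit_nrm2[OF k'u uc])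
    finally show "(\<Sum>i\<in>{..<d} - {d - 1}. (cmod (r $ i))\<^sup>2) \<le> nrm2 u / (\<sigma> (d - 2))\<^sup>2" .
  qed
  also have "(nrm2 u / (\<sigma> (d - 2))\<^sup>2) / ((cmod (hinner u av))\<^sup>2 / (\<sigma> (d - 1))\<^sup>2)
      = (\<sigma> (d - 1) / \<sigma> (d - 2))\<^sup>2 * nrm2 u / (cmod (hinner u av))\<^sup>2"
    using sdm1 sdm2 u(3) by (simp add: power_divide field_simps)
  also have "sqrt \<dots> \<le> \<epsilon> / 8"
    by (rule final_arith[OF _ s1 th(1) eps u(4)]) (use sdm1 sdm2 u(3) nrm2_nonneg uc in auto)
  finally show ?thesis .
qed



theorem lemma3p1:
  fixes K :: "complex set" and d :: nat
    and \<Gamma> :: "nat \<Rightarrow> complex mat set" and U V :: "nat \<Rightarrow> complex vec set"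
    and x y :: "nat \<Rightarrow> complex vec" and \<epsilon> \<theta> :: real
    and gs :: "complex mat list" and g :: "complex mat"
  assumes K: "Kfield K"
    and d: "d \<ge> 2"
    and sg: "semigroupK K d (\<Gamma> 1)" "semigroupK K d (\<Gamma> 2)"
    and opU: "openP K d (U 1)" "openP K d (U 2)"
    and opV: "openP K d (V 1)" "openP K d (V 2)"
    and pp: "pingpong K d \<Gamma> U V"
    and eps: "\<epsilon> > 0"
    and sep: "\<forall>i\<in>{1,2}. \<forall>j\<in>{1,2}. i \<noteq> j \<longrightarrow>
              (\<forall>p\<in>closP K d (U i). \<forall>u\<in>closP K d (V j).
                 \<forall>q\<in>PK K d \<inter> hyp K d u. dP p q \<ge> \<epsilon>)"
    and th: "0 < \<theta>" "\<theta> < \<epsilon>\<^sup>2"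
    and xy: "\<forall>i\<in>{1,2}. x i \<in> U i \<and> y i \<in> V i \<and>
                 ballP K d (x i) \<theta> \<subseteq> U i \<and> ballP K d (y i) \<theta> \<subseteq> V i"
    and red: "reduced d \<Gamma> gs"
    and gdef: "g = foldr (*) gs (1\<^sub>m d)"
    and notF: "g \<in> gen2 d (\<Gamma> 1) (\<Gamma> 2) \<and>
               \<not> (sv K d g 0 / sv K d g 1 < max (16 / (\<epsilon> * \<theta>)) (8 * sqrt (real d - 1) / \<epsilon>\<^sup>2))"
  shows "(\<forall>i\<in>{1,2}. (gs ! 0 \<in> \<Gamma> i \<and> (\<forall>j\<in>{1,2}. gs ! 0 \<in> \<Gamma> j \<longrightarrow> j = i)) \<longrightarrow>
            (\<forall>k \<sigma> k'. cartan K d g k \<sigma> k' \<longrightarrow>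
               distP (k *\<^sub>v unit_vec d 0) (U i) \<le> \<epsilon> / 8))
       \<and> (\<forall>i\<in>{1,2}. (last gs \<in> \<Gamma> i \<and> (\<forall>j\<in>{1,2}. last gs \<in> \<Gamma> j \<longrightarrow> j = i)) \<longrightarrow>
            (\<forall>k \<sigma> k'. cartan K d (minv d g) k \<sigma> k' \<longrightarrow>
               (\<forall>w\<in>PK K d. hyp K d w = spanFirst K d k \<longrightarrow>
                  distP w (V i) \<le> \<epsilon> / 8)))"
proof -
  have GL: "\<forall>i\<in>{1,2}. \<Gamma> i \<subseteq> GLK K d" using sg by (auto simp: semigroupK_def)
  have pU: "\<forall>i\<in>{1,2}. projset K d (U i)" using opU by (auto simp: openP_def)
  have pV: "\<forall>i\<in>{1,2}. projset K d (V i)" using opV by (auto simp: openP_def)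
  have x1: "x 1 \<in> closP K d (U 1)" using xy sub_clos pU by blast
  have y2: "y 2 \<in> closP K d (V 2)" using xy sub_clos pV by blast
  have y2P: "y 2 \<in> PK K d" using xy pV by (auto simp: projset_def)
  obtain q where q: "q \<in> PK K d" "q \<in> hyp K d (y 2)" using hyp_exists[OF K d y2P] by blast
  have "\<epsilon> \<le> dP (x 1) q" using sep x1 y2 q by auto
  moreover have "dP (x 1) q \<le> 1"
    using x1 q(1) by (intro dP_le1[of _ d]) (auto simp: closP_def PK_def Kvec_def)
  ultimately have e1: "\<epsilon> \<le> 1" by simp
  have "\<epsilon>\<^sup>2 \<le> 1" using e1 eps by (simp add: power_le_one)
  hence th1: "\<theta> \<le> 1" using th by simp
  have xyU: "\<forall>i\<in>{1,2}. x i \<in> U i \<and> ballP K d (x i) \<theta> \<subseteq> U i" using xy by blast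
  have xyV: "\<forall>i\<in>{1,2}. y i \<in> V i \<and> ballP K d (y i) \<theta> \<subseteq> V i" using xy by blast
  have rat: "\<not> (sv K d g 0 / sv K d g 1 < max (16 / (\<epsilon> * \<theta>)) (8 * sqrt (real d - 1) / \<epsilon>\<^sup>2))"
    using notF by blast
  show ?thesis
  proof (intro conjI ballI impI allI)
    fix i k \<sigma> k' assume i: "i \<in> {1,2}"
      and a: "gs ! 0 \<in> \<Gamma> i \<and> (\<forall>j\<in>{1,2}. gs ! 0 \<in> \<Gamma> j \<longrightarrow> j = i)"
      and C: "cartan K d g k \<sigma> k'"
    show "distP (k *\<^sub>v unit_vec d 0) (U i) \<le> \<epsilon> / 8"
      using partI[OF K d GL pp pU eps th(1) th1 xyU red gdef rat i _ _ C] a by blast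
  next
    fix i k \<sigma> k' w assume i: "i \<in> {1,2}"
      and a: "last gs \<in> \<Gamma> i \<and> (\<forall>j\<in>{1,2}. last gs \<in> \<Gamma> j \<longrightarrow> j = i)"
      and C: "cartan K d (minv d g) k \<sigma> k'" and w: "w \<in> PK K d" and hw: "hyp K d w = spanFirst K d k"
    show "distP w (V i) \<le> \<epsilon> / 8"
      using partII[OF K d GL pp pV eps th(1) th1 xyV red gdef rat i _ _ C w hw] a by blast
  qed
qed


end
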